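(* Let $\Gamma_M$ be a perfect matching graph representing a planar trivalent graph $G$ with perfect matching $M$, and let $\widetilde\Gamma_M$ be obtained from $\Gamma_M$ by a flip move (with the same ordering of matching edges). Then the hypercube of states of $\Gamma_M$ contains a bad face if and only if the hypercube of states of $\widetilde\Gamma_M$ contains a bad face.
   Context: A perfect matching graph $\Gamma_M$ is an embedding in $S^2$ of a planar trivalent graph $G$ together with a perfect matching $M$; fix an ordering $M_1,\dots,M_n$ of the edges of $M$. Resolution configurations: $D=(Z(D),A(D))$ with $Z(D)$ a finite set of circles immersed in $S^2$ (union has only transverse double points) and $A(D)$ a finite totally ordered set of disjoint embedded arcs meeting the circles exactly in their endpoints. Surgery $s_A(D)$ along $A$: in a small disk around $A$ meeting the circles in segments $\alpha$ (ends $z,w$) and $\beta$ (ends $x,y$), $z,x$ on one side of $A$ and $w,y$ on the other, replace $\alpha\cup\beta$ by strands $z$–$y$ and $x$–$w$ crossing once transversally; arcs become $A(D)\setminus\{A\}$. An arc is an $\eta$-, $\Delta$-, or $m$-arc according as surgery along it changes the number of circles by $0,+1,-1$. Resolutions: for a matching edge $e=uv$, let $a,b$ be the other edges at $u$ and $c,d$ those at $v$, with $a,c$ on the same side of $e$. The $0$-resolution removes $u,v,e$, joins $a$–$c$ and $b$–$d$ by disjoint strands parallel to $e$, and places an arc joining these two strands; the $1$-resolution joins $a$–$d$ and $b$–$c$ by strands crossing once, with no arc. For $v\in\{0,1\}^n$, $D_{\Gamma_M}(v)$ takes the $v_i$-resolution at $M_i$; its arcs $A_i$ (for $v_i=0$)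 are ordered by $i$. Bad face: states $v,u\in\{0,1\}^n$ differing exactly in two coordinates $i\neq j$ with $v_i=v_j=0$, $u_i=u_j=1$, such that (for some ordering of $\{i,j\}$) $A_i$ is an $\eta$-arc of $D_{\Gamma_M}(v)$, $A_j$ is an $\eta$-arc of $s_{A_i}(D_{\Gamma_M}(v))$, $A_j$ is a $\Delta$-arc of $D_{\Gamma_M}(v)$, and $A_i$ is an $m$-arc of $s_{A_j}(D_{\Gamma_M}(v))$ (a face where $m\circ\Delta=\eta\circ\eta$). Flip move: choose a closed disk $B\subset S^2$ whose boundary avoids vertices and meets $\Gamma_M$ transversally in $k\in\{0,1,2\}$ points in interiors of edges; replace $\Gamma_M\cap B$ by its image under a reflection of $B$ fixing those $k$ points ($k$-flip). *)

theory Defs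
  imports "HOL-Combinatorics.Permutations"
begin

text \<open>Darts of type 'd form the finite set D; alpha is the fixed-point-free edge involution
  (the two half-edges of an edge), sigma is the counterclockwise rotation of darts around
  their common vertex (vertices = sigma-orbits, all of size 3 = trivalence).
  Faces are the orbits of sigma o alpha.\<close>

definition trivalent_map :: "'d set \<Rightarrow> ('d \<Rightarrow> 'd) \<Rightarrow> ('d \<Rightarrow> 'd) \<Rightarrow> bool" where
  "trivalent_map D \<alpha> \<sigma> \<longleftrightarrow> finite D \<and> \<alpha> permutes D \<and> \<sigma> permutes D \<and>
     (\<forall>x\<in>D. \<alpha> x \<noteq> x \<and> \<alpha> (\<alpha> x) = x) \<and>
     (\<forall>x\<in>D. \<sigma> x \<noteq> x \<and> \<sigma> (\<sigma> (\<sigma> x)) = x)"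

definition orb_rel :: "('d \<Rightarrow> 'd) \<Rightarrow> 'd set \<Rightarrow> ('d \<times> 'd) set" where
  "orb_rel f A = {(x, y). x \<in> A \<and> y \<in> A \<and> (\<exists>k. (f ^^ k) x = y)}"

definition num_orbits :: "('d \<Rightarrow> 'd) \<Rightarrow> 'd set \<Rightarrow> nat" where
  "num_orbits f A = card (A // orb_rel f A)"

definition conn_rel :: "'d set \<Rightarrow> ('d \<Rightarrow> 'd) \<Rightarrow> ('d \<Rightarrow> 'd) \<Rightarrow> ('d \<times> 'd) set" where
  "conn_rel D \<alpha> \<sigma> = ({(x, y). x \<in> D \<and> y \<in> D \<and> (y = \<alpha> x \<or> y = \<sigma> x \<or> x = \<sigma> y)})\<^sup>*"

text \<open>Planarity (embedding in S^2): every connected component has Euler characteristic 2,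
  i.e. #vertices - #edges + #faces = 2.\<close>
definition planar_map :: "'d set \<Rightarrow> ('d \<Rightarrow> 'd) \<Rightarrow> ('d \<Rightarrow> 'd) \<Rightarrow> bool" where
  "planar_map D \<alpha> \<sigma> \<longleftrightarrow> trivalent_map D \<alpha> \<sigma> \<and>
     (\<forall>C \<in> D // conn_rel D \<alpha> \<sigma>.
        int (num_orbits \<sigma> C) - int (num_orbits \<alpha> C) + int (num_orbits (\<sigma> \<circ> \<alpha>) C) = 2)"

text \<open>The matching: the list ms gives, for each i < length ms, a dart ms!i of the i-th
  matching edge M_i = {ms!i, alpha (ms!i)}.\<close>
definition match_darts :: "('d \<Rightarrow> 'd) \<Rightarrow> 'd list \<Rightarrow> 'd set" where
  "match_darts \<alpha> ms = (\<Union>i<length ms. {ms ! i, \<alpha> (ms ! i)})"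

definition pm_graph :: "'d set \<Rightarrow> ('d \<Rightarrow> 'd) \<Rightarrow> ('d \<Rightarrow> 'd) \<Rightarrow> 'd list \<Rightarrow> bool" where
  "pm_graph D \<alpha> \<sigma> ms \<longleftrightarrow> planar_map D \<alpha> \<sigma> \<and> set ms \<subseteq> D \<and>
     (\<forall>i<length ms. \<forall>j<length ms. i \<noteq> j \<longrightarrow> ms ! j \<notin> {ms ! i, \<alpha> (ms ! i)}) \<and>
     (\<forall>x\<in>D. \<exists>!y. y \<in> {x, \<sigma> x, \<sigma> (\<sigma> x)} \<and> y \<in> match_darts \<alpha> ms)"

text \<open>Circles of the resolution configuration D(v) for a state v (v i = True means the
  1-resolution at M_i).  The circles are traced along the non-matching edges; at the
  matching edge M_i = uv with dart h at u and h' = alpha h at v, the other darts are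
  a = sigma h, b = sigma^2 h at u and d = sigma h', c = sigma^2 h' at v (a, c on the same
  side of the edge).  The 0-resolution joins a-c and b-d, the 1-resolution joins a-d and b-c.\<close>
definition res_link :: "'d set \<Rightarrow> ('d \<Rightarrow> 'd) \<Rightarrow> ('d \<Rightarrow> 'd) \<Rightarrow> 'd list \<Rightarrow> (nat \<Rightarrow> bool)
    \<Rightarrow> ('d \<times> 'd) set" where
  "res_link D \<alpha> \<sigma> ms v =
     {(x, y). x \<in> D - match_darts \<alpha> ms \<and> y \<in> D - match_darts \<alpha> ms \<and>
        (y = \<alpha> x \<or>
         (\<exists>i<length ms. \<exists>h \<in> {ms ! i, \<alpha> (ms ! i)}.
            (x = \<sigma> h \<and> y = (if v i then \<sigma> (\<alpha> h) else \<sigma> (\<sigma> (\<alpha> h)))) \<or>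
            (x = \<sigma> (\<sigma> h) \<and> y = (if v i then \<sigma> (\<sigma> (\<alpha> h)) else \<sigma> (\<alpha> h)))))}"

definition num_circles :: "'d set \<Rightarrow> ('d \<Rightarrow> 'd) \<Rightarrow> ('d \<Rightarrow> 'd) \<Rightarrow> 'd list \<Rightarrow> (nat \<Rightarrow> bool)
    \<Rightarrow> int" where
  "num_circles D \<alpha> \<sigma> ms v =
     int (card ((D - match_darts \<alpha> ms) // (res_link D \<alpha> \<sigma> ms v)\<^sup>*))"

text \<open>Surgery along the arc A_i of D(v) (v i = False) gives D(v with v i = True).
  Arc types: eta (circle count unchanged), Delta (+1), m (-1).\<close>
definition eta_arc where
  "eta_arc D \<alpha> \<sigma> ms v i \<longleftrightarrow> num_circles D \<alpha> \<sigma> ms (v(i := True)) = num_circles D \<alpha> \<sigma> ms v"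
definition Delta_arc where
  "Delta_arc D \<alpha> \<sigma> ms v i \<longleftrightarrow> num_circles D \<alpha> \<sigma> ms (v(i := True)) = num_circles D \<alpha> \<sigma> ms v + 1"
definition m_arc where
  "m_arc D \<alpha> \<sigma> ms v i \<longleftrightarrow> num_circles D \<alpha> \<sigma> ms (v(i := True)) = num_circles D \<alpha> \<sigma> ms v - 1"

definition has_bad_face :: "'d set \<Rightarrow> ('d \<Rightarrow> 'd) \<Rightarrow> ('d \<Rightarrow> 'd) \<Rightarrow> 'd list \<Rightarrow> bool" where
  "has_bad_face D \<alpha> \<sigma> ms \<longleftrightarrow>
     (\<exists>v i j. i < length ms \<and> j < length ms \<and> i \<noteq> j \<and> \<not> v i \<and> \<not> v j \<and>
        (eta_arc D \<alpha> \<sigma> ms v i \<and> eta_arc D \<alpha> \<sigma> ms (v(i := True)) j \<and>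
         Delta_arc D \<alpha> \<sigma> ms v j \<and> m_arc D \<alpha> \<sigma> ms (v(j := True)) i))"

text \<open>Flip move: reflect a disk containing exactly the vertices (sigma-closed dart set) S,
  whose boundary meets the graph in at most 2 points; combinatorially the rotation at every
  vertex in S is reversed (sigma^-1 = sigma^2 on S).\<close>
definition flip_move :: "'d set \<Rightarrow> ('d \<Rightarrow> 'd) \<Rightarrow> ('d \<Rightarrow> 'd) \<Rightarrow> ('d \<Rightarrow> 'd) \<Rightarrow> bool" where
  "flip_move D \<alpha> \<sigma> \<sigma>' \<longleftrightarrow>
     (\<exists>S. S \<subseteq> D \<and> (\<forall>x\<in>S. \<sigma> x \<in> S) \<and> card {x \<in> S. \<alpha> x \<notin> S} \<le> 2 \<and>
          (\<forall>x. \<sigma>' x = (if x \<in> S then \<sigma> (\<sigma> x) else \<sigma> x)))"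

end

theory Submission
  imports Defs
begin

lemma inv_even:
  assumes "finite Y" "\<forall>x\<in>Y. f x \<in> Y \<and> f x \<noteq> x \<and> f (f x) = x"
  shows "even (card Y)"
  using assms
proof (induction "card Y" arbitrary: Y rule: less_induct)
  case less
  show ?case
  proof (cases "Y = {}")
    case True then show ?thesis by simp
  next
    case False
    then obtain x where x: "x \<in> Y" by blast
    let ?Y = "Y - {x, f x}"
    have fx: "f x \<in> Y" "f x \<noteq> x" using less.prems x by auto
    have c: "card Y = card ?Y + 2"
    proof -
      have "card ?Y = card Y - card {x, f x}" using less.prems(1) x fx by (subst card_Diff_subset) auto
      moreover have "card {x, f x} = 2" using fx by simp
      moreover have "card {x, f x} \<le> card Y" using less.prems(1) x fx by (intro card_mono) auto
      ultimately show ?thesis by simp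
    qed
    have "\<forall>y\<in>?Y. f y \<in> ?Y \<and> f y \<noteq> y \<and> f (f y) = y"
      using less.prems(2) x by (metis Diff_iff insertCI insertE singletonD)
    then have "even (card ?Y)" using less.hyps[of ?Y] c less.prems(1) by simp
    then show ?thesis using c by simp
  qed
qed

lemma inv_parity:
  assumes "finite Y" "\<forall>x\<in>Y. f x \<noteq> x \<and> f (f x) = x"
  shows "even (card Y) = even (card {x\<in>Y. f x \<notin> Y})"
proof -
  let ?Y1 = "{x\<in>Y. f x \<in> Y}" and ?Y2 = "{x\<in>Y. f x \<notin> Y}"
  have "even (card ?Y1)" using assms by (intro inv_even[of _ f]) auto
  moreover have "card Y = card ?Y1 + card ?Y2"
    using assms(1) by (subst card_Un_disjoint[symmetric]) (auto intro: arg_cong[where f=card])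
  ultimately show ?thesis by simp
qed

definition jn :: "('a \<times> 'a) set \<Rightarrow> 'a \<Rightarrow> 'a \<Rightarrow> ('a \<times> 'a) set" where
  "jn r a b = r \<union> {(x,y). (x,a)\<in>r \<and> (b,y)\<in>r} \<union> {(x,y). (x,b)\<in>r \<and> (a,y)\<in>r}"

lemma jn_equiv: "equiv X r \<Longrightarrow> a\<in>X \<Longrightarrow> b\<in>X \<Longrightarrow> equiv X (jn r a b)"
  unfolding equiv_def refl_on_def sym_def trans_def jn_def by blast


lemma jn_card:
  assumes "finite X" "equiv X r" "a\<in>X" "b\<in>X"
  shows "card (X//jn r a b) = (if (a,b)\<in>r then card (X//r) else card (X//r) - 1)"
proof (cases "(a,b)\<in>r")
  case True
  then have "jn r a b = r" using assms(2) unfolding jn_def equiv_def sym_def trans_def by blast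
  then show ?thesis using True by simp
next
  case False
  have sy: "\<And>p q. (p,q)\<in>r \<Longrightarrow> (q,p)\<in>r" using assms(2) unfolding equiv_def sym_def by blast
  have tr: "\<And>p q t. (p,q)\<in>r \<Longrightarrow> (q,t)\<in>r \<Longrightarrow> (p,t)\<in>r" using assms(2) unfolding equiv_def trans_def by blast
  have rf: "(a,a)\<in>r" "(b,b)\<in>r" using assms unfolding equiv_def refl_on_def by blast+
  let ?A = "r``{a}" and ?B = "r``{b}"
  have AB: "?A \<noteq> ?B" using False assms eq_equiv_class_iff by metis
  have Aq: "?A \<in> X//r" "?B \<in> X//r" using assms by (auto intro: quotientI)
  have cls1: "\<And>x. (x,a)\<in>r \<or> (x,b)\<in>r \<Longrightarrow> jn r a b``{x} = ?A \<union> ?B"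
  proof -
    fix x assume h: "(x,a)\<in>r \<or> (x,b)\<in>r"
    show "jn r a b``{x} = ?A \<union> ?B"
    proof (rule set_eqI, rule iffI)
      fix y assume "y \<in> jn r a b``{x}"
      then have "(x,y)\<in>r \<or> ((x,a)\<in>r \<and> (b,y)\<in>r) \<or> ((x,b)\<in>r \<and> (a,y)\<in>r)" unfolding jn_def by blast
      then show "y \<in> ?A \<union> ?B" using h sy tr by blast
    next
      fix y assume "y \<in> ?A \<union> ?B"
      then have "(a,y)\<in>r \<or> (b,y)\<in>r" by blast
      then have "(x,y)\<in>r \<or> ((x,a)\<in>r \<and> (b,y)\<in>r) \<or> ((x,b)\<in>r \<and> (a,y)\<in>r)" using h sy tr by blast
      then show "y \<in> jn r a b``{x}" unfolding jn_def by blast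
    qed
  qed
  have cls2: "\<And>x. \<not>((x,a)\<in>r \<or> (x,b)\<in>r) \<Longrightarrow> jn r a b``{x} = r``{x}"
    unfolding jn_def by blast
  have "X//jn r a b = insert (?A \<union> ?B) (X//r - {?A, ?B})"
  proof
    show "X//jn r a b \<subseteq> insert (?A \<union> ?B) (X//r - {?A, ?B})"
    proof
      fix K assume "K \<in> X//jn r a b"
      then obtain x where x: "x\<in>X" "K = jn r a b``{x}" by (auto elim: quotientE)
      show "K \<in> insert (?A \<union> ?B) (X//r - {?A, ?B})"
      proof (cases "(x,a)\<in>r \<or> (x,b)\<in>r")
        case True then show ?thesis using x cls1 by auto
      next
        case F: False
        have "r``{x} \<noteq> ?A" "r``{x} \<noteq> ?B" using F assms x eq_equiv_class_iff by metis+
        moreover have "r``{x} \<in> X//r" using x by (auto intro: quotientI)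
        ultimately show ?thesis using x cls2 F by auto
      qed
    qed
    show "insert (?A \<union> ?B) (X//r - {?A, ?B}) \<subseteq> X//jn r a b"
    proof
      fix K assume K: "K \<in> insert (?A \<union> ?B) (X//r - {?A, ?B})"
      show "K \<in> X//jn r a b"
      proof (cases "K = ?A \<union> ?B")
        case True
        then have "K = jn r a b``{a}" using cls1[of a] rf by simp
        then show ?thesis using assms(3) by (auto intro: quotientI)
      next
        case False
        then have "K \<in> X//r" "K \<noteq> ?A" "K \<noteq> ?B" using K by auto
        then obtain x where x: "x\<in>X" "K = r``{x}" by (auto elim: quotientE)
        have "(x,a)\<notin>r" using x \<open>K \<noteq> ?A\<close> assms(2) equiv_class_eq by metis
        moreover have "(x,b)\<notin>r" using x \<open>K \<noteq> ?B\<close> assms(2) equiv_class_eq by metis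
        ultimately have "K = jn r a b``{x}" using cls2 x by simp
        then show ?thesis using x by (auto intro: quotientI)
      qed
    qed
  qed
  moreover have "?A \<union> ?B \<notin> X//r"
  proof
    assume H: "?A \<union> ?B \<in> X//r"
    have "a \<in> ?A" "b \<in> ?B" using rf by auto
    then have "?A \<union> ?B = ?A" "?A \<union> ?B = ?B" using quotient_disj[OF assms(2) H] Aq by blast+
    then show False using AB by blast
  qed
  moreover have fq: "finite (X//r)" using assms(1) unfolding quotient_def by simp
  ultimately have "card (X//jn r a b) = card (X//r - {?A,?B}) + 1" by simp
  moreover have "card (X//r - {?A,?B}) = card (X//r) - 2"
    using Aq AB fq by (subst card_Diff_subset) auto
  moreover have "card (X//r) \<ge> 2"
  proof -
    have "card {?A,?B} \<le> card (X//r)" using Aq fq by (intro card_mono) auto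
    then show ?thesis using AB by simp
  qed
  ultimately show ?thesis using False by simp
qed


definition eqr :: "'a set \<Rightarrow> ('a \<times> 'a) set \<Rightarrow> ('a \<times> 'a) set" where
  "eqr X E = E\<^sup>* \<inter> (X \<times> X)"

lemma rtr_in: assumes "E \<subseteq> X \<times> X" "(x,y) \<in> E\<^sup>*" "x \<in> X" shows "y \<in> X"
  using assms(2,3) by (induction rule: rtrancl_induct) (use assms(1) in blast)+

lemma img_eqr: assumes "E \<subseteq> X \<times> X" "x \<in> X" shows "E\<^sup>*``{x} = eqr X E``{x}"
  unfolding eqr_def using rtr_in[OF assms(1) _ assms(2)] assms(2) by blast

lemma quot_eqr: assumes "E \<subseteq> X \<times> X" shows "X//E\<^sup>* = X//eqr X E"
  unfolding quotient_def by (rule SUP_cong[OF refl]) (simp add: img_eqr[OF assms])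

lemma sym_rtr: "sym E \<Longrightarrow> (x,y) \<in> E\<^sup>* \<Longrightarrow> (y,x) \<in> E\<^sup>*"
  by (meson sym_rtrancl symD)

lemma equiv_eqr: "sym E \<Longrightarrow> E \<subseteq> X \<times> X \<Longrightarrow> equiv X (eqr X E)"
proof (rule equivI)
  assume a: "sym E" "E \<subseteq> X \<times> X"
  show "eqr X E \<subseteq> X \<times> X" "refl_on X (eqr X E)" unfolding eqr_def refl_on_def by auto
  show "sym (eqr X E)" unfolding eqr_def using sym_rtr[OF a(1)] by (auto intro: symI)
  show "trans (eqr X E)" unfolding eqr_def by (auto intro!: transI intro: rtrancl_trans)
qed

lemma sym_add: "sym E \<Longrightarrow> sym (E \<union> {(a,b),(b,a)})"
  unfolding sym_def by blast

lemma sub_add: "E \<subseteq> X \<times> X \<Longrightarrow> a \<in> X \<Longrightarrow> b \<in> X \<Longrightarrow> E \<union> {(a,b),(b,a)} \<subseteq> X \<times> X"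
  by simp

lemma eqr_add:
  assumes "sym E" "E \<subseteq> X \<times> X" "a\<in>X" "b\<in>X"
  shows "eqr X (E \<union> {(a,b),(b,a)}) = jn (eqr X E) a b"
proof
  let ?F = "E \<union> {(a,b),(b,a)}"
  have sy: "\<And>p q. (p,q)\<in>E\<^sup>* \<Longrightarrow> (q,p)\<in>E\<^sup>*" by (rule sym_rtr[OF assms(1)])
  have mono: "E\<^sup>* \<subseteq> ?F\<^sup>*" by (rule rtrancl_mono) blast
  have ab: "(a,b) \<in> ?F\<^sup>*" "(b,a) \<in> ?F\<^sup>*" by auto
  show "jn (eqr X E) a b \<subseteq> eqr X ?F"
    unfolding jn_def eqr_def using mono ab by (auto intro: rtrancl_trans)
  show "eqr X ?F \<subseteq> jn (eqr X E) a b"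
  proof
    fix p assume "p \<in> eqr X ?F"
    then obtain x y where p: "p = (x,y)" "(x,y) \<in> ?F\<^sup>*" "x\<in>X" by (auto simp: eqr_def)
    have "(x,y) \<in> jn (eqr X E) a b" using p(2)
    proof (induction rule: rtrancl_induct)
      case base then show ?case using p(3) by (auto simp: jn_def eqr_def)
    next
      case (step y z)
      have yX: "y \<in> X" using step.hyps(1) p(3) rtr_in[of ?F X] assms by blast
      from step.hyps(2) show ?case
      proof (elim UnE)
        assume yz: "(y,z) \<in> E"
        then have "(y,z) \<in> E\<^sup>*" "z \<in> X" using assms(2) by auto
        then show ?thesis using step.IH unfolding jn_def eqr_def by (auto intro: rtrancl_trans)
      next
        assume yz: "(y,z) \<in> {(a,b),(b,a)}"
        have eq: "equiv X (eqr X E)" by (rule equiv_eqr[OF assms(1,2)])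
        have rr: "(a,a) \<in> eqr X E" "(b,b) \<in> eqr X E" using assms(3,4) by (auto simp: eqr_def)
        have tr: "\<And>p q t. (p,q)\<in>eqr X E \<Longrightarrow> (q,t)\<in>eqr X E \<Longrightarrow> (p,t)\<in>eqr X E"
          using eq unfolding equiv_def trans_def by blast
        have IH: "(x,y) \<in> eqr X E \<or> ((x,a)\<in>eqr X E \<and> (b,y)\<in>eqr X E) \<or> ((x,b)\<in>eqr X E \<and> (a,y)\<in>eqr X E)"
          using step.IH unfolding jn_def by blast
        have "(x,z) \<in> eqr X E \<or> ((x,a)\<in>eqr X E \<and> (b,z)\<in>eqr X E) \<or> ((x,b)\<in>eqr X E \<and> (a,z)\<in>eqr X E)"
          using yz IH rr tr by blast
        then show ?thesis unfolding jn_def by blast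
      qed
    qed
    then show "p \<in> jn (eqr X E) a b" using p by simp
  qed
qed

lemma cnt_add:
  assumes "finite X" "sym E" "E \<subseteq> X \<times> X" "a\<in>X" "b\<in>X"
  shows "card (X//(E \<union> {(a,b),(b,a)})\<^sup>*) = (if (a,b)\<in>eqr X E then card (X//E\<^sup>*) else card (X//E\<^sup>*) - 1)"
proof -
  have "X//(E \<union> {(a,b),(b,a)})\<^sup>* = X//eqr X (E \<union> {(a,b),(b,a)})"
    by (rule quot_eqr[OF sub_add[OF assms(3-5)]])
  also have "\<dots> = X//jn (eqr X E) a b" by (simp only: eqr_add[OF assms(2-5)])
  finally have 1: "X//(E \<union> {(a,b),(b,a)})\<^sup>* = X//jn (eqr X E) a b" .
  have 2: "X//eqr X E = X//E\<^sup>*" by (rule quot_eqr[OF assms(3), symmetric])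
  have "card (X//(E \<union> {(a,b),(b,a)})\<^sup>*) = card (X//jn (eqr X E) a b)" by (rule arg_cong[OF 1])
  also have "\<dots> = (if (a,b)\<in>eqr X E then card (X//eqr X E) else card (X//eqr X E) - 1)"
    by (rule jn_card[OF assms(1) equiv_eqr[OF assms(2,3)] assms(4,5)])
  also have "\<dots> = (if (a,b)\<in>eqr X E then card (X//E\<^sup>*) else card (X//E\<^sup>*) - 1)" by (simp only: 2)
  finally show ?thesis .
qed

definition pp :: "'a \<Rightarrow> 'a \<Rightarrow> 'a \<Rightarrow> 'a \<Rightarrow> ('a \<times> 'a) set" where
  "pp a a2 c c2 = {(a,c),(c,a),(a2,c2),(c2,a2)}"

lemma swap_in:
  assumes "(a,a2)\<in>G\<^sup>*" "(a2,a)\<in>G\<^sup>*" "pp a a2 c c2 \<subseteq> G"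
  shows "pp a a2 c2 c \<subseteq> G\<^sup>*"
proof -
  have e: "(a,c)\<in>G\<^sup>*" "(c,a)\<in>G\<^sup>*" "(a2,c2)\<in>G\<^sup>*" "(c2,a2)\<in>G\<^sup>*" using assms(3) unfolding pp_def by auto
  have "(a,c2)\<in>G\<^sup>*" by (rule rtrancl_trans[OF assms(1) e(3)])
  moreover have "(c2,a)\<in>G\<^sup>*" by (rule rtrancl_trans[OF e(4) assms(2)])
  moreover have "(a2,c)\<in>G\<^sup>*" by (rule rtrancl_trans[OF assms(2) e(1)])
  moreover have "(c,a2)\<in>G\<^sup>*" by (rule rtrancl_trans[OF e(2) assms(1)])
  ultimately show ?thesis unfolding pp_def by simp
qed

lemma swap_out:
  assumes "(c,c2)\<in>G\<^sup>*" "(c2,c)\<in>G\<^sup>*" "pp a a2 c c2 \<subseteq> G"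
  shows "pp a a2 c2 c \<subseteq> G\<^sup>*"
proof -
  have e: "(a,c)\<in>G\<^sup>*" "(c,a)\<in>G\<^sup>*" "(a2,c2)\<in>G\<^sup>*" "(c2,a2)\<in>G\<^sup>*" using assms(3) unfolding pp_def by auto
  have "(a,c2)\<in>G\<^sup>*" by (rule rtrancl_trans[OF e(1) assms(1)])
  moreover have "(c2,a)\<in>G\<^sup>*" by (rule rtrancl_trans[OF assms(2) e(2)])
  moreover have "(a2,c)\<in>G\<^sup>*" by (rule rtrancl_trans[OF e(3) assms(2)])
  moreover have "(c,a2)\<in>G\<^sup>*" by (rule rtrancl_trans[OF assms(1) e(4)])
  ultimately show ?thesis unfolding pp_def by simp
qed

lemma pp_swap2: "pp a a2 c c2 = pp a2 a c2 c" unfolding pp_def by auto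

lemma closure_eq:
  assumes "Q \<subseteq> (R \<union> P)\<^sup>*" "P \<subseteq> (R \<union> Q)\<^sup>*"
  shows "(R \<union> P)\<^sup>* = (R \<union> Q)\<^sup>*"
proof -
  have "R \<subseteq> (R \<union> P)\<^sup>*" "R \<subseteq> (R \<union> Q)\<^sup>*" by auto
  then have 1: "R \<union> Q \<subseteq> (R \<union> P)\<^sup>*" and 2: "R \<union> P \<subseteq> (R \<union> Q)\<^sup>*" using assms by auto
  show ?thesis using rtrancl_subset_rtrancl[OF 1] rtrancl_subset_rtrancl[OF 2] by (rule equalityI[rotated])
qed

lemma ports2:
  assumes "sym R" "(a,a2)\<in>R\<^sup>*"
  shows "(R \<union> pp a a2 c c2)\<^sup>* = (R \<union> pp a a2 c2 c)\<^sup>*"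
proof (rule closure_eq)
  have r: "(a2,a)\<in>R\<^sup>*" by (rule sym_rtr[OF assms])
  have m1: "R\<^sup>* \<subseteq> (R \<union> pp a a2 c c2)\<^sup>*" "R\<^sup>* \<subseteq> (R \<union> pp a a2 c2 c)\<^sup>*" by (auto intro: rtrancl_mono[THEN subsetD])
  show "pp a a2 c2 c \<subseteq> (R \<union> pp a a2 c c2)\<^sup>*"
    by (rule swap_in) (use m1 assms(2) r in auto)
  show "pp a a2 c c2 \<subseteq> (R \<union> pp a a2 c2 c)\<^sup>*"
    by (rule swap_in) (use m1 assms(2) r in auto)
qed

lemma ports4_aligned:
  assumes "sym R" "((a1,a2)\<in>R\<^sup>* \<and> (b1,b2)\<in>R\<^sup>*) \<or> ((c1,c2)\<in>R\<^sup>* \<and> (d1,d2)\<in>R\<^sup>*)"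
  shows "(R \<union> (pp a1 a2 c1 c2 \<union> pp b1 b2 d1 d2))\<^sup>* = (R \<union> (pp a1 a2 c2 c1 \<union> pp b1 b2 d2 d1))\<^sup>*"
proof (rule closure_eq)
  let ?P = "pp a1 a2 c1 c2 \<union> pp b1 b2 d1 d2" and ?Q = "pp a1 a2 c2 c1 \<union> pp b1 b2 d2 d1"
  have m1: "R\<^sup>* \<subseteq> (R \<union> ?P)\<^sup>*" "R\<^sup>* \<subseteq> (R \<union> ?Q)\<^sup>*" by (auto intro: rtrancl_mono[THEN subsetD])
  have s: "\<And>x y. (x,y)\<in>R\<^sup>* \<Longrightarrow> (y,x)\<in>R\<^sup>*" by (rule sym_rtr[OF assms(1)])
  from assms(2) show "?Q \<subseteq> (R \<union> ?P)\<^sup>*"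
  proof
    assume h: "(a1,a2)\<in>R\<^sup>* \<and> (b1,b2)\<in>R\<^sup>*"
    have "pp a1 a2 c2 c1 \<subseteq> (R \<union> ?P)\<^sup>*" by (rule swap_in) (use m1 h s in auto)
    moreover have "pp b1 b2 d2 d1 \<subseteq> (R \<union> ?P)\<^sup>*" by (rule swap_in) (use m1 h s in auto)
    ultimately show ?thesis by simp
  next
    assume h: "(c1,c2)\<in>R\<^sup>* \<and> (d1,d2)\<in>R\<^sup>*"
    have "pp a1 a2 c2 c1 \<subseteq> (R \<union> ?P)\<^sup>*" by (rule swap_out) (use m1 h s in auto)
    moreover have "pp b1 b2 d2 d1 \<subseteq> (R \<union> ?P)\<^sup>*" by (rule swap_out) (use m1 h s in auto)
    ultimately show ?thesis by simp
  qed
  from assms(2) show "?P \<subseteq> (R \<union> ?Q)\<^sup>*"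
  proof
    assume h: "(a1,a2)\<in>R\<^sup>* \<and> (b1,b2)\<in>R\<^sup>*"
    have "pp a1 a2 c1 c2 \<subseteq> (R \<union> ?Q)\<^sup>*" by (rule swap_in) (use m1 h s in auto)
    moreover have "pp b1 b2 d1 d2 \<subseteq> (R \<union> ?Q)\<^sup>*" by (rule swap_in) (use m1 h s in auto)
    ultimately show ?thesis by simp
  next
    assume h: "(c1,c2)\<in>R\<^sup>* \<and> (d1,d2)\<in>R\<^sup>*"
    have "pp a1 a2 c1 c2 \<subseteq> (R \<union> ?Q)\<^sup>*" by (rule swap_out) (use m1 h s in auto)
    moreover have "pp b1 b2 d1 d2 \<subseteq> (R \<union> ?Q)\<^sup>*" by (rule swap_out) (use m1 h s in auto)
    ultimately show ?thesis by simp
  qed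
qed

lemma card4:
  assumes "distinct [a,b,c,d]"
  shows "card {q\<in>{a,b,c,d}. P q} = of_bool (P a) + of_bool (P b) + of_bool (P c) + of_bool (P d)"
proof -
  have "{q\<in>{a,b,c,d}. P q} = (if P a then {a} else {}) \<union> (if P b then {b} else {}) \<union> (if P c then {c} else {}) \<union> (if P d then {d} else {})"
    by auto
  then show ?thesis using assms by (cases "P a"; cases "P b"; cases "P c"; cases "P d") (auto simp: card_insert_if)
qed

lemma tri:
  fixes r
  defines "rel \<equiv> \<lambda>x y. (x,y)\<in>r"
  assumes sy: "\<And>x y. (x,y)\<in>r \<Longrightarrow> (y,x)\<in>r"
    and tr: "\<And>x y z. (x,y)\<in>r \<Longrightarrow> (y,z)\<in>r \<Longrightarrow> (x,z)\<in>r"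
    and rf: "(a1,a1)\<in>r" "(a2,a2)\<in>r" "(b1,b1)\<in>r"
    and ds: "distinct [a1,a2,b1,b2]"
    and e1: "even (card {q\<in>{a1,a2,b1,b2}. (a1,q)\<in>r})"
    and e2: "even (card {q\<in>{a1,a2,b1,b2}. (a2,q)\<in>r})"
    and e3: "even (card {q\<in>{a1,a2,b1,b2}. (b1,q)\<in>r})"
  shows "((a1,a2)\<in>r \<and> (b1,b2)\<in>r) \<or> ((a1,b1)\<in>r \<and> (a2,b2)\<in>r \<and> (a1,a2)\<notin>r) \<or> ((a1,b2)\<in>r \<and> (a2,b1)\<in>r \<and> (a1,a2)\<notin>r)"
proof -
  have o1: "odd (of_bool ((a1,a2)\<in>r) + of_bool ((a1,b1)\<in>r) + of_bool ((a1,b2)\<in>r) :: nat)"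
    using e1 card4[OF ds, of "\<lambda>q. (a1,q)\<in>r"] rf by simp
  have o2: "odd (of_bool ((a2,a1)\<in>r) + of_bool ((a2,b1)\<in>r) + of_bool ((a2,b2)\<in>r) :: nat)"
    using e2 card4[OF ds, of "\<lambda>q. (a2,q)\<in>r"] rf by simp
  have o3: "odd (of_bool ((b1,a1)\<in>r) + of_bool ((b1,a2)\<in>r) + of_bool ((b1,b2)\<in>r) :: nat)"
    using e3 card4[OF ds, of "\<lambda>q. (b1,q)\<in>r"] rf by simp
  show ?thesis
  proof (cases "(a1,a2)\<in>r")
    case True
    show ?thesis
    proof (cases "(a1,b1)\<in>r")
      case T2: True
      then have "(a1,b2)\<in>r" using o1 True by (cases "(a1,b2)\<in>r") simp_all
      then have "(b1,b2)\<in>r" using tr[OF sy[OF T2]] by blast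
      then show ?thesis using True by blast
    next
      case F2: False
      have "(b1,a1)\<notin>r" using F2 sy by blast
      moreover have "(b1,a2)\<notin>r" using F2 tr[OF True sy] by blast
      ultimately have "(b1,b2)\<in>r" using o3 by (cases "(b1,b2)\<in>r") simp_all
      then show ?thesis using True by blast
    qed
  next
    case False
    have a21: "(a2,a1)\<notin>r" using False sy by blast
    show ?thesis
    proof (cases "(a1,b1)\<in>r")
      case T2: True
      have "(a2,b1)\<notin>r" using False tr[OF T2 sy] by blast
      then have "(a2,b2)\<in>r" using o2 a21 by (cases "(a2,b2)\<in>r") simp_all
      then show ?thesis using T2 False by blast
    next
      case F2: False
      have "(a1,b2)\<in>r" using o1 False F2 by (cases "(a1,b2)\<in>r") simp_all
      moreover have "(a2,b2)\<notin>r" using False tr[OF \<open>(a1,b2)\<in>r\<close> sy] by blast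
      ultimately have "(a2,b1)\<in>r" using o2 a21 by (cases "(a2,b1)\<in>r") simp_all
      then show ?thesis using \<open>(a1,b2)\<in>r\<close> False by blast
    qed
  qed
qed

lemma cnt_add2:
  assumes "finite X" "sym E" "E \<subseteq> X \<times> X" "a\<in>X" "b\<in>X"
  shows "card (X//(E \<union> {(a,b),(b,a)})\<^sup>*) = card (X//E\<^sup>*) - (if (a,b)\<in>eqr X E then 0 else 1)"
  using cnt_add[OF assms] by simp

lemma chain4:
  assumes fX: "finite X" and sR: "sym R" and RX: "R \<subseteq> X \<times> X"
    and pts: "p1\<in>X" "q1\<in>X" "p2\<in>X" "q2\<in>X" "p3\<in>X" "q3\<in>X" "p4\<in>X" "q4\<in>X"
  shows "card (X//(R \<union> {(p1,q1),(q1,p1)} \<union> {(p2,q2),(q2,p2)} \<union> {(p3,q3),(q3,p3)} \<union> {(p4,q4),(q4,p4)})\<^sup>*) =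
    card (X//R\<^sup>*) - (if (p1,q1)\<in>eqr X R then 0 else 1)
      - (if (p2,q2)\<in>jn (eqr X R) p1 q1 then 0 else 1)
      - (if (p3,q3)\<in>jn (jn (eqr X R) p1 q1) p2 q2 then 0 else 1)
      - (if (p4,q4)\<in>jn (jn (jn (eqr X R) p1 q1) p2 q2) p3 q3 then 0 else 1)"
proof -
  define E1 where "E1 = R \<union> {(p1,q1),(q1,p1)}"
  define E2 where "E2 = E1 \<union> {(p2,q2),(q2,p2)}"
  define E3 where "E3 = E2 \<union> {(p3,q3),(q3,p3)}"
  have s1: "sym E1" "E1 \<subseteq> X \<times> X" unfolding E1_def using sym_add[OF sR] sub_add[OF RX pts(1,2)] by auto
  have s2: "sym E2" "E2 \<subseteq> X \<times> X" unfolding E2_def using sym_add[OF s1(1)] sub_add[OF s1(2) pts(3,4)] by auto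
  have s3: "sym E3" "E3 \<subseteq> X \<times> X" unfolding E3_def using sym_add[OF s2(1)] sub_add[OF s2(2) pts(5,6)] by auto
  have q1: "eqr X E1 = jn (eqr X R) p1 q1" unfolding E1_def by (rule eqr_add[OF sR RX pts(1,2)])
  have q2: "eqr X E2 = jn (eqr X E1) p2 q2" unfolding E2_def by (rule eqr_add[OF s1 pts(3,4)])
  have q3: "eqr X E3 = jn (eqr X E2) p3 q3" unfolding E3_def by (rule eqr_add[OF s2 pts(5,6)])
  have c1: "card (X//E1\<^sup>*) = card (X//R\<^sup>*) - (if (p1,q1)\<in>eqr X R then 0 else 1)"
    unfolding E1_def by (rule cnt_add2[OF fX sR RX pts(1,2)])
  have c2: "card (X//E2\<^sup>*) = card (X//E1\<^sup>*) - (if (p2,q2)\<in>eqr X E1 then 0 else 1)"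
    unfolding E2_def by (rule cnt_add2[OF fX s1 pts(3,4)])
  have c3: "card (X//E3\<^sup>*) = card (X//E2\<^sup>*) - (if (p3,q3)\<in>eqr X E2 then 0 else 1)"
    unfolding E3_def by (rule cnt_add2[OF fX s2 pts(5,6)])
  have c4: "card (X//(E3 \<union> {(p4,q4),(q4,p4)})\<^sup>*) = card (X//E3\<^sup>*) - (if (p4,q4)\<in>eqr X E3 then 0 else 1)"
    by (rule cnt_add2[OF fX s3 pts(7,8)])
  have e: "R \<union> {(p1,q1),(q1,p1)} \<union> {(p2,q2),(q2,p2)} \<union> {(p3,q3),(q3,p3)} \<union> {(p4,q4),(q4,p4)} = E3 \<union> {(p4,q4),(q4,p4)}"
    unfolding E1_def E2_def E3_def ..
  show ?thesis unfolding e c4 c3 c2 c1 q3 q2 q1 ..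
qed

lemma neg_rel:
  assumes sy: "\<And>x y. (x,y)\<in>r \<Longrightarrow> (y,x)\<in>r" and tr: "\<And>x y z. (x,y)\<in>r \<Longrightarrow> (y,z)\<in>r \<Longrightarrow> (x,z)\<in>r"
    and "(p,p0)\<in>r" "(q,q0)\<in>r" "(p0,q0)\<notin>r"
  shows "(p,q)\<notin>r"
proof
  assume "(p,q)\<in>r"
  then have "(p0,q)\<in>r" using tr[OF sy[OF assms(3)]] by blast
  then have "(p0,q0)\<in>r" using tr assms(4) by blast
  then show False using assms(5) by blast
qed

lemma jn_mem: "(x,y)\<in>jn r a b \<longleftrightarrow> (x,y)\<in>r \<or> ((x,a)\<in>r \<and> (b,y)\<in>r) \<or> ((x,b)\<in>r \<and> (a,y)\<in>r)"
  unfolding jn_def by blast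

lemma cross_v1:
  fixes X :: "'a set" and R
  defines "r \<equiv> eqr X R"
  assumes fX: "finite X" and sR: "sym R" and RX: "R \<subseteq> X \<times> X"
    and pts: "a1\<in>X" "a2\<in>X" "b1\<in>X" "b2\<in>X" "c1\<in>X" "c2\<in>X" "d1\<in>X" "d2\<in>X"
    and i1: "(a1,b1)\<in>r" and i2: "(a2,b2)\<in>r" and i3: "(a1,a2)\<notin>r"
    and o1: "(c1,d1)\<in>r" and o2: "(c2,d2)\<in>r" and o3: "(c1,c2)\<notin>r"
    and sd: "(a1,c1)\<notin>r" "(a1,c2)\<notin>r" "(a2,c1)\<notin>r" "(a2,c2)\<notin>r"
  shows "card (X//(R \<union> (pp a1 a2 c1 c2 \<union> pp b1 b2 d1 d2))\<^sup>*) = card (X//(R \<union> (pp a1 a2 c2 c1 \<union> pp b1 b2 d2 d1))\<^sup>*)"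
proof -
  have eq: "equiv X r" unfolding r_def by (rule equiv_eqr[OF sR RX])
  have sy: "\<And>x y. (x,y)\<in>r \<Longrightarrow> (y,x)\<in>r" using eq unfolding equiv_def sym_def by blast
  have tr: "\<And>x y z. (x,y)\<in>r \<Longrightarrow> (y,z)\<in>r \<Longrightarrow> (x,z)\<in>r" using eq unfolding equiv_def trans_def by blast
  have rf: "\<And>x. x\<in>X \<Longrightarrow> (x,x)\<in>r" using eq unfolding equiv_def refl_on_def by blast
  have rp_a1: "(a1,a1)\<in>r" by (rule rf[OF pts(1)])
  have rp_a2: "(a2,a2)\<in>r" by (rule rf[OF pts(2)])
  have rp_b1: "(b1,a1)\<in>r" by (rule sy[OF i1])
  have rp_b2: "(b2,a2)\<in>r" by (rule sy[OF i2])
  have rp_c1: "(c1,c1)\<in>r" by (rule rf[OF pts(5)])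
  have rp_c2: "(c2,c2)\<in>r" by (rule rf[OF pts(6)])
  have rp_d1: "(d1,c1)\<in>r" by (rule sy[OF o1])
  have rp_d2: "(d2,c2)\<in>r" by (rule sy[OF o2])
  have bn_a1_a2: "(a1,a2)\<notin>r" by (rule i3)
  have bn_a2_a1: "(a2,a1)\<notin>r" using i3 sy by blast
  have bn_c1_c2: "(c1,c2)\<notin>r" by (rule o3)
  have bn_c2_c1: "(c2,c1)\<notin>r" using o3 sy by blast
  have bn_a1_c1: "(a1,c1)\<notin>r" by (rule sd(1))
  have bn_c1_a1: "(c1,a1)\<notin>r" using sd(1) sy by blast
  have bn_a1_c2: "(a1,c2)\<notin>r" by (rule sd(2))
  have bn_c2_a1: "(c2,a1)\<notin>r" using sd(2) sy by blast
  have bn_a2_c1: "(a2,c1)\<notin>r" by (rule sd(3))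
  have bn_c1_a2: "(c1,a2)\<notin>r" using sd(3) sy by blast
  have bn_a2_c2: "(a2,c2)\<notin>r" by (rule sd(4))
  have bn_c2_a2: "(c2,a2)\<notin>r" using sd(4) sy by blast
  have t_a1_a1: "(a1,a1)\<in>r" by (rule tr[OF rp_a1 sy[OF rp_a1]])
  have t_a1_a2: "(a1,a2)\<notin>r" by (rule neg_rel[OF sy tr rp_a1 rp_a2 bn_a1_a2])
  have t_a1_b1: "(a1,b1)\<in>r" by (rule tr[OF rp_a1 sy[OF rp_b1]])
  have t_a1_b2: "(a1,b2)\<notin>r" by (rule neg_rel[OF sy tr rp_a1 rp_b2 bn_a1_a2])
  have t_a1_c1: "(a1,c1)\<notin>r" by (rule neg_rel[OF sy tr rp_a1 rp_c1 bn_a1_c1])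
  have t_a1_c2: "(a1,c2)\<notin>r" by (rule neg_rel[OF sy tr rp_a1 rp_c2 bn_a1_c2])
  have t_a1_d1: "(a1,d1)\<notin>r" by (rule neg_rel[OF sy tr rp_a1 rp_d1 bn_a1_c1])
  have t_a1_d2: "(a1,d2)\<notin>r" by (rule neg_rel[OF sy tr rp_a1 rp_d2 bn_a1_c2])
  have t_a2_a1: "(a2,a1)\<notin>r" by (rule neg_rel[OF sy tr rp_a2 rp_a1 bn_a2_a1])
  have t_a2_a2: "(a2,a2)\<in>r" by (rule tr[OF rp_a2 sy[OF rp_a2]])
  have t_a2_b1: "(a2,b1)\<notin>r" by (rule neg_rel[OF sy tr rp_a2 rp_b1 bn_a2_a1])
  have t_a2_b2: "(a2,b2)\<in>r" by (rule tr[OF rp_a2 sy[OF rp_b2]])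
  have t_a2_c1: "(a2,c1)\<notin>r" by (rule neg_rel[OF sy tr rp_a2 rp_c1 bn_a2_c1])
  have t_a2_c2: "(a2,c2)\<notin>r" by (rule neg_rel[OF sy tr rp_a2 rp_c2 bn_a2_c2])
  have t_a2_d1: "(a2,d1)\<notin>r" by (rule neg_rel[OF sy tr rp_a2 rp_d1 bn_a2_c1])
  have t_a2_d2: "(a2,d2)\<notin>r" by (rule neg_rel[OF sy tr rp_a2 rp_d2 bn_a2_c2])
  have t_b1_a1: "(b1,a1)\<in>r" by (rule tr[OF rp_b1 sy[OF rp_a1]])
  have t_b1_a2: "(b1,a2)\<notin>r" by (rule neg_rel[OF sy tr rp_b1 rp_a2 bn_a1_a2])
  have t_b1_b1: "(b1,b1)\<in>r" by (rule tr[OF rp_b1 sy[OF rp_b1]])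
  have t_b1_b2: "(b1,b2)\<notin>r" by (rule neg_rel[OF sy tr rp_b1 rp_b2 bn_a1_a2])
  have t_b1_c1: "(b1,c1)\<notin>r" by (rule neg_rel[OF sy tr rp_b1 rp_c1 bn_a1_c1])
  have t_b1_c2: "(b1,c2)\<notin>r" by (rule neg_rel[OF sy tr rp_b1 rp_c2 bn_a1_c2])
  have t_b1_d1: "(b1,d1)\<notin>r" by (rule neg_rel[OF sy tr rp_b1 rp_d1 bn_a1_c1])
  have t_b1_d2: "(b1,d2)\<notin>r" by (rule neg_rel[OF sy tr rp_b1 rp_d2 bn_a1_c2])
  have t_b2_a1: "(b2,a1)\<notin>r" by (rule neg_rel[OF sy tr rp_b2 rp_a1 bn_a2_a1])
  have t_b2_a2: "(b2,a2)\<in>r" by (rule tr[OF rp_b2 sy[OF rp_a2]])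
  have t_b2_b1: "(b2,b1)\<notin>r" by (rule neg_rel[OF sy tr rp_b2 rp_b1 bn_a2_a1])
  have t_b2_b2: "(b2,b2)\<in>r" by (rule tr[OF rp_b2 sy[OF rp_b2]])
  have t_b2_c1: "(b2,c1)\<notin>r" by (rule neg_rel[OF sy tr rp_b2 rp_c1 bn_a2_c1])
  have t_b2_c2: "(b2,c2)\<notin>r" by (rule neg_rel[OF sy tr rp_b2 rp_c2 bn_a2_c2])
  have t_b2_d1: "(b2,d1)\<notin>r" by (rule neg_rel[OF sy tr rp_b2 rp_d1 bn_a2_c1])
  have t_b2_d2: "(b2,d2)\<notin>r" by (rule neg_rel[OF sy tr rp_b2 rp_d2 bn_a2_c2])
  have t_c1_a1: "(c1,a1)\<notin>r" by (rule neg_rel[OF sy tr rp_c1 rp_a1 bn_c1_a1])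
  have t_c1_a2: "(c1,a2)\<notin>r" by (rule neg_rel[OF sy tr rp_c1 rp_a2 bn_c1_a2])
  have t_c1_b1: "(c1,b1)\<notin>r" by (rule neg_rel[OF sy tr rp_c1 rp_b1 bn_c1_a1])
  have t_c1_b2: "(c1,b2)\<notin>r" by (rule neg_rel[OF sy tr rp_c1 rp_b2 bn_c1_a2])
  have t_c1_c1: "(c1,c1)\<in>r" by (rule tr[OF rp_c1 sy[OF rp_c1]])
  have t_c1_c2: "(c1,c2)\<notin>r" by (rule neg_rel[OF sy tr rp_c1 rp_c2 bn_c1_c2])
  have t_c1_d1: "(c1,d1)\<in>r" by (rule tr[OF rp_c1 sy[OF rp_d1]])
  have t_c1_d2: "(c1,d2)\<notin>r" by (rule neg_rel[OF sy tr rp_c1 rp_d2 bn_c1_c2])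
  have t_c2_a1: "(c2,a1)\<notin>r" by (rule neg_rel[OF sy tr rp_c2 rp_a1 bn_c2_a1])
  have t_c2_a2: "(c2,a2)\<notin>r" by (rule neg_rel[OF sy tr rp_c2 rp_a2 bn_c2_a2])
  have t_c2_b1: "(c2,b1)\<notin>r" by (rule neg_rel[OF sy tr rp_c2 rp_b1 bn_c2_a1])
  have t_c2_b2: "(c2,b2)\<notin>r" by (rule neg_rel[OF sy tr rp_c2 rp_b2 bn_c2_a2])
  have t_c2_c1: "(c2,c1)\<notin>r" by (rule neg_rel[OF sy tr rp_c2 rp_c1 bn_c2_c1])
  have t_c2_c2: "(c2,c2)\<in>r" by (rule tr[OF rp_c2 sy[OF rp_c2]])
  have t_c2_d1: "(c2,d1)\<notin>r" by (rule neg_rel[OF sy tr rp_c2 rp_d1 bn_c2_c1])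
  have t_c2_d2: "(c2,d2)\<in>r" by (rule tr[OF rp_c2 sy[OF rp_d2]])
  have t_d1_a1: "(d1,a1)\<notin>r" by (rule neg_rel[OF sy tr rp_d1 rp_a1 bn_c1_a1])
  have t_d1_a2: "(d1,a2)\<notin>r" by (rule neg_rel[OF sy tr rp_d1 rp_a2 bn_c1_a2])
  have t_d1_b1: "(d1,b1)\<notin>r" by (rule neg_rel[OF sy tr rp_d1 rp_b1 bn_c1_a1])
  have t_d1_b2: "(d1,b2)\<notin>r" by (rule neg_rel[OF sy tr rp_d1 rp_b2 bn_c1_a2])
  have t_d1_c1: "(d1,c1)\<in>r" by (rule tr[OF rp_d1 sy[OF rp_c1]])
  have t_d1_c2: "(d1,c2)\<notin>r" by (rule neg_rel[OF sy tr rp_d1 rp_c2 bn_c1_c2])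
  have t_d1_d1: "(d1,d1)\<in>r" by (rule tr[OF rp_d1 sy[OF rp_d1]])
  have t_d1_d2: "(d1,d2)\<notin>r" by (rule neg_rel[OF sy tr rp_d1 rp_d2 bn_c1_c2])
  have t_d2_a1: "(d2,a1)\<notin>r" by (rule neg_rel[OF sy tr rp_d2 rp_a1 bn_c2_a1])
  have t_d2_a2: "(d2,a2)\<notin>r" by (rule neg_rel[OF sy tr rp_d2 rp_a2 bn_c2_a2])
  have t_d2_b1: "(d2,b1)\<notin>r" by (rule neg_rel[OF sy tr rp_d2 rp_b1 bn_c2_a1])
  have t_d2_b2: "(d2,b2)\<notin>r" by (rule neg_rel[OF sy tr rp_d2 rp_b2 bn_c2_a2])
  have t_d2_c1: "(d2,c1)\<notin>r" by (rule neg_rel[OF sy tr rp_d2 rp_c1 bn_c2_c1])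
  have t_d2_c2: "(d2,c2)\<in>r" by (rule tr[OF rp_d2 sy[OF rp_c2]])
  have t_d2_d1: "(d2,d1)\<notin>r" by (rule neg_rel[OF sy tr rp_d2 rp_d1 bn_c2_c1])
  have t_d2_d2: "(d2,d2)\<in>r" by (rule tr[OF rp_d2 sy[OF rp_d2]])
  have eP: "R \<union> (pp a1 a2 c1 c2 \<union> pp b1 b2 d1 d2) = R \<union> {(a1,c1),(c1,a1)} \<union> {(a2,c2),(c2,a2)} \<union> {(b1,d1),(d1,b1)} \<union> {(b2,d2),(d2,b2)}"
    unfolding pp_def by auto
  have eQ: "R \<union> (pp a1 a2 c2 c1 \<union> pp b1 b2 d2 d1) = R \<union> {(a1,c2),(c2,a1)} \<union> {(a2,c1),(c1,a2)} \<union> {(b1,d2),(d2,b1)} \<union> {(b2,d1),(d1,b2)}"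
    unfolding pp_def by auto
  show ?thesis unfolding eP eQ
    chain4[OF fX sR RX pts(1) pts(5) pts(2) pts(6) pts(3) pts(7) pts(4) pts(8)]
    chain4[OF fX sR RX pts(1) pts(6) pts(2) pts(5) pts(3) pts(8) pts(4) pts(7)]
    r_def[symmetric]
    by (simp only: jn_mem t_a1_a1 t_a1_a2 t_a1_b1 t_a1_b2 t_a1_c1 t_a1_c2 t_a1_d1 t_a1_d2 t_a2_a1 t_a2_a2 t_a2_b1 t_a2_b2 t_a2_c1 t_a2_c2 t_a2_d1 t_a2_d2 t_b1_a1 t_b1_a2 t_b1_b1 t_b1_b2 t_b1_c1 t_b1_c2 t_b1_d1 t_b1_d2 t_b2_a1 t_b2_a2 t_b2_b1 t_b2_b2 t_b2_c1 t_b2_c2 t_b2_d1 t_b2_d2 t_c1_a1 t_c1_a2 t_c1_b1 t_c1_b2 t_c1_c1 t_c1_c2 t_c1_d1 t_c1_d2 t_c2_a1 t_c2_a2 t_c2_b1 t_c2_b2 t_c2_c1 t_c2_c2 t_c2_d1 t_c2_d2 t_d1_a1 t_d1_a2 t_d1_b1 t_d1_b2 t_d1_c1 t_d1_c2 t_d1_d1 t_d1_d2 t_d2_a1 t_d2_a2 t_d2_b1 t_d2_b2 t_d2_c1 t_d2_c2 t_d2_d1 t_d2_d2 simp_thms if_True if_False)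
qed

lemma cross_v2:
  fixes X :: "'a set" and R
  defines "r \<equiv> eqr X R"
  assumes fX: "finite X" and sR: "sym R" and RX: "R \<subseteq> X \<times> X"
    and pts: "a1\<in>X" "a2\<in>X" "b1\<in>X" "b2\<in>X" "c1\<in>X" "c2\<in>X" "d1\<in>X" "d2\<in>X"
    and i1: "(a1,b1)\<in>r" and i2: "(a2,b2)\<in>r" and i3: "(a1,a2)\<notin>r"
    and o1: "(c1,d2)\<in>r" and o2: "(c2,d1)\<in>r" and o3: "(c1,c2)\<notin>r"
    and sd: "(a1,c1)\<notin>r" "(a1,c2)\<notin>r" "(a2,c1)\<notin>r" "(a2,c2)\<notin>r"
  shows "card (X//(R \<union> (pp a1 a2 c1 c2 \<union> pp b1 b2 d1 d2))\<^sup>*) = card (X//(R \<union> (pp a1 a2 c2 c1 \<union> pp b1 b2 d2 d1))\<^sup>*)"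
proof -
  have eq: "equiv X r" unfolding r_def by (rule equiv_eqr[OF sR RX])
  have sy: "\<And>x y. (x,y)\<in>r \<Longrightarrow> (y,x)\<in>r" using eq unfolding equiv_def sym_def by blast
  have tr: "\<And>x y z. (x,y)\<in>r \<Longrightarrow> (y,z)\<in>r \<Longrightarrow> (x,z)\<in>r" using eq unfolding equiv_def trans_def by blast
  have rf: "\<And>x. x\<in>X \<Longrightarrow> (x,x)\<in>r" using eq unfolding equiv_def refl_on_def by blast
  have rp_a1: "(a1,a1)\<in>r" by (rule rf[OF pts(1)])
  have rp_a2: "(a2,a2)\<in>r" by (rule rf[OF pts(2)])
  have rp_b1: "(b1,a1)\<in>r" by (rule sy[OF i1])
  have rp_b2: "(b2,a2)\<in>r" by (rule sy[OF i2])
  have rp_c1: "(c1,c1)\<in>r" by (rule rf[OF pts(5)])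
  have rp_c2: "(c2,c2)\<in>r" by (rule rf[OF pts(6)])
  have rp_d1: "(d1,c2)\<in>r" by (rule sy[OF o2])
  have rp_d2: "(d2,c1)\<in>r" by (rule sy[OF o1])
  have bn_a1_a2: "(a1,a2)\<notin>r" by (rule i3)
  have bn_a2_a1: "(a2,a1)\<notin>r" using i3 sy by blast
  have bn_c1_c2: "(c1,c2)\<notin>r" by (rule o3)
  have bn_c2_c1: "(c2,c1)\<notin>r" using o3 sy by blast
  have bn_a1_c1: "(a1,c1)\<notin>r" by (rule sd(1))
  have bn_c1_a1: "(c1,a1)\<notin>r" using sd(1) sy by blast
  have bn_a1_c2: "(a1,c2)\<notin>r" by (rule sd(2))
  have bn_c2_a1: "(c2,a1)\<notin>r" using sd(2) sy by blast
  have bn_a2_c1: "(a2,c1)\<notin>r" by (rule sd(3))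
  have bn_c1_a2: "(c1,a2)\<notin>r" using sd(3) sy by blast
  have bn_a2_c2: "(a2,c2)\<notin>r" by (rule sd(4))
  have bn_c2_a2: "(c2,a2)\<notin>r" using sd(4) sy by blast
  have t_a1_a1: "(a1,a1)\<in>r" by (rule tr[OF rp_a1 sy[OF rp_a1]])
  have t_a1_a2: "(a1,a2)\<notin>r" by (rule neg_rel[OF sy tr rp_a1 rp_a2 bn_a1_a2])
  have t_a1_b1: "(a1,b1)\<in>r" by (rule tr[OF rp_a1 sy[OF rp_b1]])
  have t_a1_b2: "(a1,b2)\<notin>r" by (rule neg_rel[OF sy tr rp_a1 rp_b2 bn_a1_a2])
  have t_a1_c1: "(a1,c1)\<notin>r" by (rule neg_rel[OF sy tr rp_a1 rp_c1 bn_a1_c1])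
  have t_a1_c2: "(a1,c2)\<notin>r" by (rule neg_rel[OF sy tr rp_a1 rp_c2 bn_a1_c2])
  have t_a1_d1: "(a1,d1)\<notin>r" by (rule neg_rel[OF sy tr rp_a1 rp_d1 bn_a1_c2])
  have t_a1_d2: "(a1,d2)\<notin>r" by (rule neg_rel[OF sy tr rp_a1 rp_d2 bn_a1_c1])
  have t_a2_a1: "(a2,a1)\<notin>r" by (rule neg_rel[OF sy tr rp_a2 rp_a1 bn_a2_a1])
  have t_a2_a2: "(a2,a2)\<in>r" by (rule tr[OF rp_a2 sy[OF rp_a2]])
  have t_a2_b1: "(a2,b1)\<notin>r" by (rule neg_rel[OF sy tr rp_a2 rp_b1 bn_a2_a1])
  have t_a2_b2: "(a2,b2)\<in>r" by (rule tr[OF rp_a2 sy[OF rp_b2]])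
  have t_a2_c1: "(a2,c1)\<notin>r" by (rule neg_rel[OF sy tr rp_a2 rp_c1 bn_a2_c1])
  have t_a2_c2: "(a2,c2)\<notin>r" by (rule neg_rel[OF sy tr rp_a2 rp_c2 bn_a2_c2])
  have t_a2_d1: "(a2,d1)\<notin>r" by (rule neg_rel[OF sy tr rp_a2 rp_d1 bn_a2_c2])
  have t_a2_d2: "(a2,d2)\<notin>r" by (rule neg_rel[OF sy tr rp_a2 rp_d2 bn_a2_c1])
  have t_b1_a1: "(b1,a1)\<in>r" by (rule tr[OF rp_b1 sy[OF rp_a1]])
  have t_b1_a2: "(b1,a2)\<notin>r" by (rule neg_rel[OF sy tr rp_b1 rp_a2 bn_a1_a2])
  have t_b1_b1: "(b1,b1)\<in>r" by (rule tr[OF rp_b1 sy[OF rp_b1]])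
  have t_b1_b2: "(b1,b2)\<notin>r" by (rule neg_rel[OF sy tr rp_b1 rp_b2 bn_a1_a2])
  have t_b1_c1: "(b1,c1)\<notin>r" by (rule neg_rel[OF sy tr rp_b1 rp_c1 bn_a1_c1])
  have t_b1_c2: "(b1,c2)\<notin>r" by (rule neg_rel[OF sy tr rp_b1 rp_c2 bn_a1_c2])
  have t_b1_d1: "(b1,d1)\<notin>r" by (rule neg_rel[OF sy tr rp_b1 rp_d1 bn_a1_c2])
  have t_b1_d2: "(b1,d2)\<notin>r" by (rule neg_rel[OF sy tr rp_b1 rp_d2 bn_a1_c1])
  have t_b2_a1: "(b2,a1)\<notin>r" by (rule neg_rel[OF sy tr rp_b2 rp_a1 bn_a2_a1])
  have t_b2_a2: "(b2,a2)\<in>r" by (rule tr[OF rp_b2 sy[OF rp_a2]])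
  have t_b2_b1: "(b2,b1)\<notin>r" by (rule neg_rel[OF sy tr rp_b2 rp_b1 bn_a2_a1])
  have t_b2_b2: "(b2,b2)\<in>r" by (rule tr[OF rp_b2 sy[OF rp_b2]])
  have t_b2_c1: "(b2,c1)\<notin>r" by (rule neg_rel[OF sy tr rp_b2 rp_c1 bn_a2_c1])
  have t_b2_c2: "(b2,c2)\<notin>r" by (rule neg_rel[OF sy tr rp_b2 rp_c2 bn_a2_c2])
  have t_b2_d1: "(b2,d1)\<notin>r" by (rule neg_rel[OF sy tr rp_b2 rp_d1 bn_a2_c2])
  have t_b2_d2: "(b2,d2)\<notin>r" by (rule neg_rel[OF sy tr rp_b2 rp_d2 bn_a2_c1])
  have t_c1_a1: "(c1,a1)\<notin>r" by (rule neg_rel[OF sy tr rp_c1 rp_a1 bn_c1_a1])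
  have t_c1_a2: "(c1,a2)\<notin>r" by (rule neg_rel[OF sy tr rp_c1 rp_a2 bn_c1_a2])
  have t_c1_b1: "(c1,b1)\<notin>r" by (rule neg_rel[OF sy tr rp_c1 rp_b1 bn_c1_a1])
  have t_c1_b2: "(c1,b2)\<notin>r" by (rule neg_rel[OF sy tr rp_c1 rp_b2 bn_c1_a2])
  have t_c1_c1: "(c1,c1)\<in>r" by (rule tr[OF rp_c1 sy[OF rp_c1]])
  have t_c1_c2: "(c1,c2)\<notin>r" by (rule neg_rel[OF sy tr rp_c1 rp_c2 bn_c1_c2])
  have t_c1_d1: "(c1,d1)\<notin>r" by (rule neg_rel[OF sy tr rp_c1 rp_d1 bn_c1_c2])
  have t_c1_d2: "(c1,d2)\<in>r" by (rule tr[OF rp_c1 sy[OF rp_d2]])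
  have t_c2_a1: "(c2,a1)\<notin>r" by (rule neg_rel[OF sy tr rp_c2 rp_a1 bn_c2_a1])
  have t_c2_a2: "(c2,a2)\<notin>r" by (rule neg_rel[OF sy tr rp_c2 rp_a2 bn_c2_a2])
  have t_c2_b1: "(c2,b1)\<notin>r" by (rule neg_rel[OF sy tr rp_c2 rp_b1 bn_c2_a1])
  have t_c2_b2: "(c2,b2)\<notin>r" by (rule neg_rel[OF sy tr rp_c2 rp_b2 bn_c2_a2])
  have t_c2_c1: "(c2,c1)\<notin>r" by (rule neg_rel[OF sy tr rp_c2 rp_c1 bn_c2_c1])
  have t_c2_c2: "(c2,c2)\<in>r" by (rule tr[OF rp_c2 sy[OF rp_c2]])
  have t_c2_d1: "(c2,d1)\<in>r" by (rule tr[OF rp_c2 sy[OF rp_d1]])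
  have t_c2_d2: "(c2,d2)\<notin>r" by (rule neg_rel[OF sy tr rp_c2 rp_d2 bn_c2_c1])
  have t_d1_a1: "(d1,a1)\<notin>r" by (rule neg_rel[OF sy tr rp_d1 rp_a1 bn_c2_a1])
  have t_d1_a2: "(d1,a2)\<notin>r" by (rule neg_rel[OF sy tr rp_d1 rp_a2 bn_c2_a2])
  have t_d1_b1: "(d1,b1)\<notin>r" by (rule neg_rel[OF sy tr rp_d1 rp_b1 bn_c2_a1])
  have t_d1_b2: "(d1,b2)\<notin>r" by (rule neg_rel[OF sy tr rp_d1 rp_b2 bn_c2_a2])
  have t_d1_c1: "(d1,c1)\<notin>r" by (rule neg_rel[OF sy tr rp_d1 rp_c1 bn_c2_c1])
  have t_d1_c2: "(d1,c2)\<in>r" by (rule tr[OF rp_d1 sy[OF rp_c2]])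
  have t_d1_d1: "(d1,d1)\<in>r" by (rule tr[OF rp_d1 sy[OF rp_d1]])
  have t_d1_d2: "(d1,d2)\<notin>r" by (rule neg_rel[OF sy tr rp_d1 rp_d2 bn_c2_c1])
  have t_d2_a1: "(d2,a1)\<notin>r" by (rule neg_rel[OF sy tr rp_d2 rp_a1 bn_c1_a1])
  have t_d2_a2: "(d2,a2)\<notin>r" by (rule neg_rel[OF sy tr rp_d2 rp_a2 bn_c1_a2])
  have t_d2_b1: "(d2,b1)\<notin>r" by (rule neg_rel[OF sy tr rp_d2 rp_b1 bn_c1_a1])
  have t_d2_b2: "(d2,b2)\<notin>r" by (rule neg_rel[OF sy tr rp_d2 rp_b2 bn_c1_a2])
  have t_d2_c1: "(d2,c1)\<in>r" by (rule tr[OF rp_d2 sy[OF rp_c1]])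
  have t_d2_c2: "(d2,c2)\<notin>r" by (rule neg_rel[OF sy tr rp_d2 rp_c2 bn_c1_c2])
  have t_d2_d1: "(d2,d1)\<notin>r" by (rule neg_rel[OF sy tr rp_d2 rp_d1 bn_c1_c2])
  have t_d2_d2: "(d2,d2)\<in>r" by (rule tr[OF rp_d2 sy[OF rp_d2]])
  have eP: "R \<union> (pp a1 a2 c1 c2 \<union> pp b1 b2 d1 d2) = R \<union> {(a1,c1),(c1,a1)} \<union> {(a2,c2),(c2,a2)} \<union> {(b1,d1),(d1,b1)} \<union> {(b2,d2),(d2,b2)}"
    unfolding pp_def by auto
  have eQ: "R \<union> (pp a1 a2 c2 c1 \<union> pp b1 b2 d2 d1) = R \<union> {(a1,c2),(c2,a1)} \<union> {(a2,c1),(c1,a2)} \<union> {(b1,d2),(d2,b1)} \<union> {(b2,d1),(d1,b2)}"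
    unfolding pp_def by auto
  show ?thesis unfolding eP eQ
    chain4[OF fX sR RX pts(1) pts(5) pts(2) pts(6) pts(3) pts(7) pts(4) pts(8)]
    chain4[OF fX sR RX pts(1) pts(6) pts(2) pts(5) pts(3) pts(8) pts(4) pts(7)]
    r_def[symmetric]
    by (simp only: jn_mem t_a1_a1 t_a1_a2 t_a1_b1 t_a1_b2 t_a1_c1 t_a1_c2 t_a1_d1 t_a1_d2 t_a2_a1 t_a2_a2 t_a2_b1 t_a2_b2 t_a2_c1 t_a2_c2 t_a2_d1 t_a2_d2 t_b1_a1 t_b1_a2 t_b1_b1 t_b1_b2 t_b1_c1 t_b1_c2 t_b1_d1 t_b1_d2 t_b2_a1 t_b2_a2 t_b2_b1 t_b2_b2 t_b2_c1 t_b2_c2 t_b2_d1 t_b2_d2 t_c1_a1 t_c1_a2 t_c1_b1 t_c1_b2 t_c1_c1 t_c1_c2 t_c1_d1 t_c1_d2 t_c2_a1 t_c2_a2 t_c2_b1 t_c2_b2 t_c2_c1 t_c2_c2 t_c2_d1 t_c2_d2 t_d1_a1 t_d1_a2 t_d1_b1 t_d1_b2 t_d1_c1 t_d1_c2 t_d1_d1 t_d1_d2 t_d2_a1 t_d2_a2 t_d2_b1 t_d2_b2 t_d2_c1 t_d2_c2 t_d2_d1 t_d2_d2 simp_thms if_True if_False)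
qed

lemma eqr_mem: "(x,y)\<in>eqr X R \<longleftrightarrow> (x,y)\<in>R\<^sup>* \<and> x\<in>X \<and> y\<in>X"
  unfolding eqr_def by blast

lemma ports4:
  assumes fX: "finite X" and sR: "sym R" and RX: "R \<subseteq> X \<times> X"
    and pts: "a1\<in>X" "a2\<in>X" "b1\<in>X" "b2\<in>X" "c1\<in>X" "c2\<in>X" "d1\<in>X" "d2\<in>X"
    and dsI: "distinct [a1,a2,b1,b2]" and dsO: "distinct [c1,c2,d1,d2]"
    and side: "\<forall>p\<in>{a1,a2,b1,b2}. \<forall>q\<in>{c1,c2,d1,d2}. (p,q)\<notin>R\<^sup>*"
    and evI: "\<forall>p\<in>{a1,a2,b1,b2}. even (card {q\<in>{a1,a2,b1,b2}. (p,q)\<in>R\<^sup>*})"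
    and evO: "\<forall>p\<in>{c1,c2,d1,d2}. even (card {q\<in>{c1,c2,d1,d2}. (p,q)\<in>R\<^sup>*})"
  shows "card (X//(R \<union> (pp a1 a2 c1 c2 \<union> pp b1 b2 d1 d2))\<^sup>*) = card (X//(R \<union> (pp a1 a2 c2 c1 \<union> pp b1 b2 d2 d1))\<^sup>*)"
proof -
  have sy: "\<And>x y. (x,y)\<in>R\<^sup>* \<Longrightarrow> (y,x)\<in>R\<^sup>*" by (rule sym_rtr[OF sR])
  have tr: "\<And>x y z. (x,y)\<in>R\<^sup>* \<Longrightarrow> (y,z)\<in>R\<^sup>* \<Longrightarrow> (x,z)\<in>R\<^sup>*" by (rule rtrancl_trans)
  have rf: "\<And>x. (x,x)\<in>R\<^sup>*" by simp
  have TI: "((a1,a2)\<in>R\<^sup>* \<and> (b1,b2)\<in>R\<^sup>*) \<or> ((a1,b1)\<in>R\<^sup>* \<and> (a2,b2)\<in>R\<^sup>* \<and> (a1,a2)\<notin>R\<^sup>*) \<or> ((a1,b2)\<in>R\<^sup>* \<and> (a2,b1)\<in>R\<^sup>* \<and> (a1,a2)\<notin>R\<^sup>*)"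
    by (rule tri[OF sy tr rf rf rf dsI]) (use evI in auto)
  have TO: "((c1,c2)\<in>R\<^sup>* \<and> (d1,d2)\<in>R\<^sup>*) \<or> ((c1,d1)\<in>R\<^sup>* \<and> (c2,d2)\<in>R\<^sup>* \<and> (c1,c2)\<notin>R\<^sup>*) \<or> ((c1,d2)\<in>R\<^sup>* \<and> (c2,d1)\<in>R\<^sup>* \<and> (c1,c2)\<notin>R\<^sup>*)"
    by (rule tri[OF sy tr rf rf rf dsO]) (use evO in auto)
  have sd: "(a1,c1)\<notin>eqr X R" "(a1,c2)\<notin>eqr X R" "(a2,c1)\<notin>eqr X R" "(a2,c2)\<notin>eqr X R"
    using side unfolding eqr_mem by auto
  have PP: "pp a1 a2 c1 c2 \<union> pp b2 b1 d2 d1 = pp a1 a2 c1 c2 \<union> pp b1 b2 d1 d2"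
    and QQ: "pp a1 a2 c2 c1 \<union> pp b2 b1 d1 d2 = pp a1 a2 c2 c1 \<union> pp b1 b2 d2 d1"
    unfolding pp_def by auto
  consider (al) "((a1,a2)\<in>R\<^sup>* \<and> (b1,b2)\<in>R\<^sup>*) \<or> ((c1,c2)\<in>R\<^sup>* \<and> (d1,d2)\<in>R\<^sup>*)"
    | (c11) "(a1,b1)\<in>R\<^sup>*" "(a2,b2)\<in>R\<^sup>*" "(a1,a2)\<notin>R\<^sup>*" "(c1,d1)\<in>R\<^sup>*" "(c2,d2)\<in>R\<^sup>*" "(c1,c2)\<notin>R\<^sup>*"
    | (c12) "(a1,b1)\<in>R\<^sup>*" "(a2,b2)\<in>R\<^sup>*" "(a1,a2)\<notin>R\<^sup>*" "(c1,d2)\<in>R\<^sup>*" "(c2,d1)\<in>R\<^sup>*" "(c1,c2)\<notin>R\<^sup>*"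
    | (c21) "(a1,b2)\<in>R\<^sup>*" "(a2,b1)\<in>R\<^sup>*" "(a1,a2)\<notin>R\<^sup>*" "(c1,d1)\<in>R\<^sup>*" "(c2,d2)\<in>R\<^sup>*" "(c1,c2)\<notin>R\<^sup>*"
    | (c22) "(a1,b2)\<in>R\<^sup>*" "(a2,b1)\<in>R\<^sup>*" "(a1,a2)\<notin>R\<^sup>*" "(c1,d2)\<in>R\<^sup>*" "(c2,d1)\<in>R\<^sup>*" "(c1,c2)\<notin>R\<^sup>*"
    using TI TO by blast
  then show ?thesis
  proof cases
    case al
    show ?thesis using ports4_aligned[OF sR al] by simp
  next
    case c11
    show ?thesis
      by (rule cross_v1[OF fX sR RX pts]) (use c11 pts sd in \<open>simp_all add: eqr_mem\<close>)
  next
    case c12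
    show ?thesis
      by (rule cross_v2[OF fX sR RX pts]) (use c12 pts sd in \<open>simp_all add: eqr_mem\<close>)
  next
    case c21
    have "card (X//(R \<union> (pp a1 a2 c1 c2 \<union> pp b2 b1 d2 d1))\<^sup>*) = card (X//(R \<union> (pp a1 a2 c2 c1 \<union> pp b2 b1 d1 d2))\<^sup>*)"
      by (rule cross_v2[OF fX sR RX pts(1,2,4,3,5,6,8,7)]) (use c21 pts sd in \<open>simp_all add: eqr_mem\<close>)
    then show ?thesis unfolding PP QQ .
  next
    case c22
    have "card (X//(R \<union> (pp a1 a2 c1 c2 \<union> pp b2 b1 d2 d1))\<^sup>*) = card (X//(R \<union> (pp a1 a2 c2 c1 \<union> pp b2 b1 d1 d2))\<^sup>*)"
      by (rule cross_v1[OF fX sR RX pts(1,2,4,3,5,6,8,7)]) (use c22 pts sd in \<open>simp_all add: eqr_mem\<close>)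
    then show ?thesis unfolding PP QQ .
  qed
qed

definition lk :: "('d \<Rightarrow> 'd) \<Rightarrow> ('d \<Rightarrow> 'd) \<Rightarrow> 'd list \<Rightarrow> nat \<Rightarrow> bool \<Rightarrow> ('d \<times> 'd) set" where
  "lk \<alpha> \<sigma> ms i b = {(x,y). \<exists>h\<in>{ms!i, \<alpha> (ms!i)}.
     (x = \<sigma> h \<and> y = (if b then \<sigma> (\<alpha> h) else \<sigma> (\<sigma> (\<alpha> h)))) \<or>
     (x = \<sigma> (\<sigma> h) \<and> y = (if b then \<sigma> (\<sigma> (\<alpha> h)) else \<sigma> (\<alpha> h)))}"

lemma res_link_lk: "res_link D \<alpha> \<sigma> ms v = {(x,y). x \<in> D - match_darts \<alpha> ms \<and> y \<in> D - match_darts \<alpha> ms \<and>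
   (y = \<alpha> x \<or> (\<exists>i<length ms. (x,y) \<in> lk \<alpha> \<sigma> ms i (v i)))}"
  unfolding res_link_def lk_def by blast

lemma lk_pp:
  assumes "\<alpha> (\<alpha> m) = m" "m = ms!i"
  shows "lk \<alpha> \<sigma> ms i b = (if b then pp (\<sigma> m) (\<sigma> (\<sigma> m)) (\<sigma> (\<alpha> m)) (\<sigma> (\<sigma> (\<alpha> m)))
                              else pp (\<sigma> m) (\<sigma> (\<sigma> m)) (\<sigma> (\<sigma> (\<alpha> m))) (\<sigma> (\<alpha> m)))"
  using assms unfolding lk_def pp_def by (cases b) auto

locale pmg =
  fixes D :: "'d set" and \<alpha> \<sigma> :: "'d \<Rightarrow> 'd" and ms :: "'d list"
  assumes pm: "pm_graph D \<alpha> \<sigma> ms"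
begin

abbreviation "MD \<equiv> match_darts \<alpha> ms"
abbreviation "X \<equiv> D - MD"
abbreviation "n \<equiv> length ms"

lemma tm: "trivalent_map D \<alpha> \<sigma>" using pm unfolding pm_graph_def planar_map_def by blast
lemma fD: "finite D" using tm unfolding trivalent_map_def by blast
lemma aP: "\<alpha> permutes D" using tm unfolding trivalent_map_def by blast
lemma sP: "\<sigma> permutes D" using tm unfolding trivalent_map_def by blast
lemma a_ne: "x\<in>D \<Longrightarrow> \<alpha> x \<noteq> x" using tm unfolding trivalent_map_def by blast
lemma aa: "x\<in>D \<Longrightarrow> \<alpha> (\<alpha> x) = x" using tm unfolding trivalent_map_def by blast
lemma s_ne: "x\<in>D \<Longrightarrow> \<sigma> x \<noteq> x" using tm unfolding trivalent_map_def by blast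
lemma sss: "x\<in>D \<Longrightarrow> \<sigma> (\<sigma> (\<sigma> x)) = x" using tm unfolding trivalent_map_def by blast
lemma msD: "set ms \<subseteq> D" using pm unfolding pm_graph_def by blast
lemma msd: "i < n \<Longrightarrow> j < n \<Longrightarrow> i \<noteq> j \<Longrightarrow> ms!j \<notin> {ms!i, \<alpha> (ms!i)}"
  using pm unfolding pm_graph_def by blast
lemma uq: "x\<in>D \<Longrightarrow> \<exists>!y. y \<in> {x, \<sigma> x, \<sigma> (\<sigma> x)} \<and> y \<in> MD"
  using pm unfolding pm_graph_def by blast

lemma a_in: "x\<in>D \<Longrightarrow> \<alpha> x \<in> D" using permutes_in_image[OF aP] by simp
lemma s_in: "x\<in>D \<Longrightarrow> \<sigma> x \<in> D" using permutes_in_image[OF sP] by simp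
lemma s_inj: "\<sigma> x = \<sigma> y \<Longrightarrow> x = y" using permutes_inj[OF sP] by (simp add: inj_eq)
lemma a_inj: "\<alpha> x = \<alpha> y \<Longrightarrow> x = y" using permutes_inj[OF aP] by (simp add: inj_eq)

lemma ms_in: "i < n \<Longrightarrow> ms!i \<in> D" using msD by auto

lemma MD_iff: "h \<in> MD \<longleftrightarrow> (\<exists>i<n. h = ms!i \<or> h = \<alpha> (ms!i))"
  unfolding match_darts_def by auto
lemma MD_D: "h \<in> MD \<Longrightarrow> h \<in> D" using MD_iff ms_in a_in by auto
lemma MD_a: assumes "h \<in> MD" shows "\<alpha> h \<in> MD"
proof -
  obtain i where i: "i<n" "h = ms!i \<or> h = \<alpha> (ms!i)" using assms MD_iff by blast
  then have "\<alpha> h = \<alpha> (ms!i) \<or> \<alpha> h = ms!i" using aa[OF ms_in[OF i(1)]] by auto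
  then show ?thesis using MD_iff i(1) by blast
qed
lemma ms_MD: "i < n \<Longrightarrow> ms!i \<in> MD" "i < n \<Longrightarrow> \<alpha> (ms!i) \<in> MD" using MD_iff by auto

lemma s2ne: "x\<in>D \<Longrightarrow> \<sigma> (\<sigma> x) \<noteq> x"
proof
  assume "x\<in>D" "\<sigma> (\<sigma> x) = x"
  then have "\<sigma> x = \<sigma> (\<sigma> (\<sigma> x))" by simp
  then have "\<sigma> x = x" using sss[OF \<open>x\<in>D\<close>] by simp
  then show False using s_ne \<open>x\<in>D\<close> by blast
qed

lemma s12: assumes "x\<in>D" shows "\<sigma> x \<noteq> \<sigma> (\<sigma> x)"
proof
  assume "\<sigma> x = \<sigma> (\<sigma> x)"
  then have "x = \<sigma> x" by (rule s_inj)
  then show False using s_ne[OF assms] by simp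
qed

lemma vert: "h \<in> MD \<Longrightarrow> h' \<in> MD \<Longrightarrow> h' \<in> {h, \<sigma> h, \<sigma> (\<sigma> h)} \<Longrightarrow> h' = h"
  using uq[OF MD_D] by blast

lemma nm1: "h \<in> MD \<Longrightarrow> \<sigma> h \<notin> MD"
proof
  assume a: "h \<in> MD" "\<sigma> h \<in> MD"
  then have "\<sigma> h = h" by (intro vert) auto
  then show False using s_ne[OF MD_D[OF a(1)]] by simp
qed
lemma nm2: "h \<in> MD \<Longrightarrow> \<sigma> (\<sigma> h) \<notin> MD"
proof
  assume a: "h \<in> MD" "\<sigma> (\<sigma> h) \<in> MD"
  then have "\<sigma> (\<sigma> h) = h" by (intro vert) auto
  then show False using s2ne[OF MD_D[OF a(1)]] by simp
qed

lemma dart_of: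
  assumes "h \<in> MD" "h' \<in> MD" "x \<in> {\<sigma> h, \<sigma> (\<sigma> h)}" "x \<in> {\<sigma> h', \<sigma> (\<sigma> h')}"
  shows "h = h'"
proof -
  have D: "h\<in>D" "h'\<in>D" using assms MD_D by auto
  have "h' \<in> {h, \<sigma> h, \<sigma> (\<sigma> h)}"
  proof -
    consider "\<sigma> h = \<sigma> h'" | "\<sigma> h = \<sigma> (\<sigma> h')" | "\<sigma> (\<sigma> h) = \<sigma> h'" | "\<sigma> (\<sigma> h) = \<sigma> (\<sigma> h')"
      using assms(3,4) by blast
    then show ?thesis
    proof cases
      case 1 then show ?thesis using s_inj by blast
    next
      case 2
      then have "h = \<sigma> h'" using s_inj by blast
      then have "\<sigma> (\<sigma> h) = h'" using sss[OF D(2)] by simp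
      then show ?thesis by blast
    next
      case 3 then have "\<sigma> h = h'" using s_inj by blast
      then show ?thesis by blast
    next
      case 4 then show ?thesis using s_inj by blast
    qed
  qed
  then show ?thesis using vert[OF assms(1,2)] by simp
qed

lemma idx: "i < n \<Longrightarrow> j < n \<Longrightarrow> h \<in> {ms!i, \<alpha> (ms!i)} \<Longrightarrow> h \<in> {ms!j, \<alpha> (ms!j)} \<Longrightarrow> i = j"
proof (rule ccontr)
  assume a: "i < n" "j < n" "h \<in> {ms!i, \<alpha> (ms!i)}" "h \<in> {ms!j, \<alpha> (ms!j)}" "i \<noteq> j"
  have 1: "ms!j \<notin> {ms!i, \<alpha> (ms!i)}" using msd a by blast
  have "ms!j = h \<or> ms!j = \<alpha> h" using a(3,4) aa ms_in a(1,2) by auto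
  then show False using 1 a(3) aa ms_in a(1) by auto
qed

lemma X_a: assumes "x \<in> X" shows "\<alpha> x \<in> X"
proof -
  have "x\<in>D" "x\<notin>MD" using assms by auto
  have "\<alpha> x \<notin> MD"
  proof
    assume "\<alpha> x \<in> MD"
    then have "\<alpha> (\<alpha> x) \<in> MD" by (rule MD_a)
    then show False using aa[OF \<open>x\<in>D\<close>] \<open>x\<notin>MD\<close> by simp
  qed
  then show ?thesis using a_in[OF \<open>x\<in>D\<close>] by simp
qed

lemma lk_cases:
  assumes "(x,y) \<in> lk \<alpha> \<sigma> ms i b"
  obtains h where "h \<in> {ms!i, \<alpha> (ms!i)}" "x \<in> {\<sigma> h, \<sigma> (\<sigma> h)}" "y \<in> {\<sigma> (\<alpha> h), \<sigma> (\<sigma> (\<alpha> h))}"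
  using assms unfolding lk_def by (auto split: if_splits)

lemma lk_X: assumes "i < n" "(x,y) \<in> lk \<alpha> \<sigma> ms i b" shows "x \<in> X" "y \<in> X"
proof -
  obtain h where h: "h \<in> {ms!i, \<alpha> (ms!i)}" "x \<in> {\<sigma> h, \<sigma> (\<sigma> h)}" "y \<in> {\<sigma> (\<alpha> h), \<sigma> (\<sigma> (\<alpha> h))}"
    using lk_cases[OF assms(2)] by blast
  have hm: "h \<in> MD" "\<alpha> h \<in> MD" using h(1) ms_MD assms(1) MD_a by auto
  then have "h\<in>D" "\<alpha> h \<in> D" using MD_D by auto
  then show "x \<in> X" "y \<in> X" using h(2,3) nm1 nm2 hm s_in by auto
qed

end

context pmg begin

definition hv :: "'d \<Rightarrow> 'd" where "hv x = (if \<sigma> x \<in> MD then \<sigma> x else \<sigma> (\<sigma> x))"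
definition gg :: "'d \<Rightarrow> 'd" where "gg x = (if \<sigma> x \<in> MD then \<sigma> (\<sigma> x) else \<sigma> x)"
definition Bf :: "(nat \<Rightarrow> bool) \<Rightarrow> 'd \<Rightarrow> 'd" where
  "Bf v x = (SOME y. \<exists>i<n. (x,y) \<in> lk \<alpha> \<sigma> ms i (v i))"

lemma hv: assumes "x \<in> X" shows "hv x \<in> MD" "x \<in> {\<sigma> (hv x), \<sigma> (\<sigma> (hv x))}" "\<sigma> x \<notin> MD \<Longrightarrow> \<sigma> (\<sigma> x) \<in> MD"
proof -
  have xD: "x \<in> D" "x \<notin> MD" using assms by auto
  obtain y where y: "y \<in> {x, \<sigma> x, \<sigma> (\<sigma> x)}" "y \<in> MD" using uq[OF xD(1)] by blast
  show 3: "\<sigma> x \<notin> MD \<Longrightarrow> \<sigma> (\<sigma> x) \<in> MD" using y xD by auto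
  show "hv x \<in> MD" unfolding hv_def using 3 by auto
  show "x \<in> {\<sigma> (hv x), \<sigma> (\<sigma> (hv x))}" unfolding hv_def using sss[OF xD(1)] by auto
qed

lemma gg_all: assumes "x \<in> X" shows "gg x \<in> X \<and> gg x \<noteq> x \<and> gg (gg x) = x \<and> hv (gg x) = hv x"
proof -
  have xD: "x \<in> D" "x \<notin> MD" using assms by auto
  show ?thesis
  proof (cases "\<sigma> x \<in> MD")
    case True
    have g: "gg x = \<sigma> (\<sigma> x)" using True unfolding gg_def by simp
    have s: "\<sigma> (gg x) = x" using g sss[OF xD(1)] by simp
    have 1: "gg x \<in> X" using g nm1[OF True] s_in xD(1) by auto
    have 2: "gg x \<noteq> x" using g s2ne[OF xD(1)] by simp
    have 3: "gg (gg x) = x" using s xD(2) unfolding gg_def by simp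
    have 4: "hv (gg x) = hv x" using s xD(2) True unfolding hv_def by simp
    show ?thesis using 1 2 3 4 by blast
  next
    case False
    have M: "\<sigma> (\<sigma> x) \<in> MD" using hv(3)[OF assms False] .
    have g: "gg x = \<sigma> x" using False unfolding gg_def by simp
    have 1: "gg x \<in> X" using g False s_in xD(1) by auto
    have 2: "gg x \<noteq> x" using g s_ne[OF xD(1)] by simp
    have 3: "gg (gg x) = x" using g M sss[OF xD(1)] unfolding gg_def by simp
    have 4: "hv (gg x) = hv x" using g M False unfolding hv_def by simp
    show ?thesis using 1 2 3 4 by blast
  qed
qed

lemma lkpp: assumes "i < n"
  shows "lk \<alpha> \<sigma> ms i b = (if b then pp (\<sigma> (ms!i)) (\<sigma> (\<sigma> (ms!i))) (\<sigma> (\<alpha> (ms!i))) (\<sigma> (\<sigma> (\<alpha> (ms!i))))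
                              else pp (\<sigma> (ms!i)) (\<sigma> (\<sigma> (ms!i))) (\<sigma> (\<sigma> (\<alpha> (ms!i)))) (\<sigma> (\<alpha> (ms!i))))"
  by (rule lk_pp) (simp_all add: aa ms_in assms)

lemma lk_sym: assumes "i < n" "(x,y) \<in> lk \<alpha> \<sigma> ms i b" shows "(y,x) \<in> lk \<alpha> \<sigma> ms i b"
  using assms(2) unfolding lkpp[OF assms(1)] pp_def by (auto split: if_splits)

lemma B_un:
  assumes "i < n" "j < n" "(x,y) \<in> lk \<alpha> \<sigma> ms i b" "(x,y') \<in> lk \<alpha> \<sigma> ms j b'"
  shows "i = j"
proof -
  obtain h where h: "h \<in> {ms!i, \<alpha> (ms!i)}" "x \<in> {\<sigma> h, \<sigma> (\<sigma> h)}" using lk_cases[OF assms(3)] by metis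
  obtain h' where h': "h' \<in> {ms!j, \<alpha> (ms!j)}" "x \<in> {\<sigma> h', \<sigma> (\<sigma> h')}" using lk_cases[OF assms(4)] by metis
  have "h \<in> MD" "h' \<in> MD" using h(1) h'(1) ms_MD assms(1,2) by auto
  then have "h = h'" using dart_of h(2) h'(2) by blast
  then show "i = j" using idx[OF assms(1,2)] h(1) h'(1) by blast
qed

lemma B_un2:
  assumes "i < n" "(x,y) \<in> lk \<alpha> \<sigma> ms i b" "(x,y') \<in> lk \<alpha> \<sigma> ms i b"
  shows "y = y'"
proof -
  let ?m = "ms!i"
  have hm: "?m \<in> MD" "\<alpha> ?m \<in> MD" using ms_MD assms(1) by auto
  have D: "?m \<in> D" "\<alpha> ?m \<in> D" using hm MD_D by auto
  have dj: "\<not> (x \<in> {\<sigma> ?m, \<sigma> (\<sigma> ?m)} \<and> x \<in> {\<sigma> (\<alpha> ?m), \<sigma> (\<sigma> (\<alpha> ?m))})"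
    using dart_of[OF hm] a_ne[OF D(1)] by metis
  have n1: "\<sigma> ?m \<noteq> \<sigma> (\<sigma> ?m)" "\<sigma> (\<alpha> ?m) \<noteq> \<sigma> (\<sigma> (\<alpha> ?m))" using s12 D by auto
  show ?thesis using assms(2,3) dj n1 unfolding lkpp[OF assms(1)] pp_def
    by (auto split: if_splits)
qed

lemma B_ex: assumes "x \<in> X" shows "\<exists>y. \<exists>i<n. (x,y) \<in> lk \<alpha> \<sigma> ms i (v i)"
proof -
  obtain i where i: "i < n" "hv x = ms!i \<or> hv x = \<alpha> (ms!i)" using hv(1)[OF assms] MD_iff by blast
  have "x = \<sigma> (hv x) \<or> x = \<sigma> (\<sigma> (hv x))" using hv(2)[OF assms] by blast
  then have "\<exists>y. (x,y) \<in> lk \<alpha> \<sigma> ms i (v i)" using i(2) unfolding lk_def by blast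
  then show ?thesis using i(1) by blast
qed

lemma Bf_in: assumes "x \<in> X" shows "\<exists>i<n. (x, Bf v x) \<in> lk \<alpha> \<sigma> ms i (v i)"
  unfolding Bf_def by (rule someI_ex[OF B_ex[OF assms]])

lemma Bf_eq: assumes "i < n" "(x,y) \<in> lk \<alpha> \<sigma> ms i (v i)" shows "Bf v x = y"
proof -
  have "x \<in> X" using lk_X[OF assms] by blast
  then obtain j where j: "j < n" "(x, Bf v x) \<in> lk \<alpha> \<sigma> ms j (v j)" using Bf_in by blast
  have "j = i" using B_un[OF j(1) assms(1) j(2) assms(2)] .
  then show ?thesis using B_un2[OF assms(1) _ assms(2)] j(2) by blast
qed

lemma Bf_X: "x \<in> X \<Longrightarrow> Bf v x \<in> X"
  using Bf_in lk_X by blast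

lemma Bf_inv: assumes "x \<in> X" shows "Bf v (Bf v x) = x"
proof -
  obtain i where i: "i < n" "(x, Bf v x) \<in> lk \<alpha> \<sigma> ms i (v i)" using Bf_in[OF assms] by blast
  show ?thesis by (rule Bf_eq[where v=v, OF i(1) lk_sym[OF i]])
qed

lemma Bf_hv: assumes "x \<in> X" "i < n" "(x,y) \<in> lk \<alpha> \<sigma> ms i b"
  shows "hv x \<in> {ms!i, \<alpha> (ms!i)}" "y \<in> {\<sigma> (\<alpha> (hv x)), \<sigma> (\<sigma> (\<alpha> (hv x)))}"
proof -
  obtain h where h: "h \<in> {ms!i, \<alpha> (ms!i)}" "x \<in> {\<sigma> h, \<sigma> (\<sigma> h)}" "y \<in> {\<sigma> (\<alpha> h), \<sigma> (\<sigma> (\<alpha> h))}"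
    using lk_cases[OF assms(3)] by metis
  have "h \<in> MD" using h(1) ms_MD assms(2) by auto
  then have "h = hv x" using dart_of hv[OF assms(1)] h(2) by blast
  then show "hv x \<in> {ms!i, \<alpha> (ms!i)}" "y \<in> {\<sigma> (\<alpha> (hv x)), \<sigma> (\<sigma> (\<alpha> (hv x)))}" using h by auto
qed

lemma Bf_ne: assumes "x \<in> X" shows "Bf v x \<noteq> x"
proof
  assume e: "Bf v x = x"
  obtain i where i: "i < n" "(x, Bf v x) \<in> lk \<alpha> \<sigma> ms i (v i)" using Bf_in[OF assms] by blast
  have h: "hv x \<in> MD" "x \<in> {\<sigma> (hv x), \<sigma> (\<sigma> (hv x))}" using hv[OF assms] by auto
  have "x \<in> {\<sigma> (\<alpha> (hv x)), \<sigma> (\<sigma> (\<alpha> (hv x)))}" using Bf_hv(2)[OF assms i] e by simp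
  then have "hv x = \<alpha> (hv x)" using dart_of[OF h(1) MD_a[OF h(1)] h(2)] by blast
  then show False using a_ne[OF MD_D[OF h(1)]] by simp
qed

lemma Bf_idx: assumes "x \<in> X" "i < n" "hv x \<in> {ms!i, \<alpha> (ms!i)}" shows "(x, Bf v x) \<in> lk \<alpha> \<sigma> ms i (v i)"
proof -
  obtain j where j: "j < n" "(x, Bf v x) \<in> lk \<alpha> \<sigma> ms j (v j)" using Bf_in[OF assms(1)] by blast
  have "hv x \<in> {ms!j, \<alpha> (ms!j)}" using Bf_hv(1)[OF assms(1) j] .
  then have "j = i" using idx[OF j(1) assms(2)] assms(3) by blast
  then show ?thesis using j by simp
qed

end

lemma pp_flip: "pp a a2 c c2 = pp c c2 a a2" unfolding pp_def by auto

locale flp = pmg +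
  fixes S and \<sigma>'
  assumes SD: "S \<subseteq> D" and Sc: "\<forall>x\<in>S. \<sigma> x \<in> S" and Kc: "card {x\<in>S. \<alpha> x \<notin> S} \<le> 2"
    and sd: "\<forall>x. \<sigma>' x = (if x \<in> S then \<sigma> (\<sigma> x) else \<sigma> x)"
begin

lemma S_iff: assumes "x \<in> D" shows "\<sigma> x \<in> S \<longleftrightarrow> x \<in> S"
proof
  assume "\<sigma> x \<in> S"
  then have "\<sigma> (\<sigma> (\<sigma> x)) \<in> S" using Sc by blast
  then show "x \<in> S" using sss[OF assms] by simp
next
  assume "x \<in> S" then show "\<sigma> x \<in> S" using Sc by blast
qed

lemma S_iff2: assumes "x \<in> D" shows "\<sigma> (\<sigma> x) \<in> S \<longleftrightarrow> x \<in> S"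
  using S_iff[OF s_in[OF assms]] S_iff[OF assms] by simp

lemma s'1: "\<sigma>' h = (if h \<in> S then \<sigma> (\<sigma> h) else \<sigma> h)" using sd by blast

lemma s'2: assumes "h \<in> D" shows "\<sigma>' (\<sigma>' h) = (if h \<in> S then \<sigma> h else \<sigma> (\<sigma> h))"
proof (cases "h \<in> S")
  case True
  then have "\<sigma> (\<sigma> h) \<in> S" using S_iff2[OF assms] by simp
  then show ?thesis using True s'1 sss[OF s_in[OF assms]] by simp
next
  case False
  then have "\<sigma> h \<notin> S" using S_iff[OF assms] by simp
  then show ?thesis using False s'1 by simp
qed

definition cr :: "nat \<Rightarrow> bool" where "cr i = ((ms!i \<in> S) \<noteq> (\<alpha> (ms!i) \<in> S))"
definition tg :: "(nat \<Rightarrow> bool) \<Rightarrow> nat \<Rightarrow> bool" where "tg v i = (if cr i then \<not> v i else v i)"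

lemma lk_flip: assumes "i < n" shows "lk \<alpha> \<sigma>' ms i b = lk \<alpha> \<sigma> ms i (tg (\<lambda>_. b) i)"
proof -
  let ?m = "ms!i"
  have D: "?m \<in> D" "\<alpha> ?m \<in> D" using ms_in[OF assms] a_in by auto
  have 1: "lk \<alpha> \<sigma>' ms i b = (if b then pp (\<sigma>' ?m) (\<sigma>' (\<sigma>' ?m)) (\<sigma>' (\<alpha> ?m)) (\<sigma>' (\<sigma>' (\<alpha> ?m)))
                              else pp (\<sigma>' ?m) (\<sigma>' (\<sigma>' ?m)) (\<sigma>' (\<sigma>' (\<alpha> ?m))) (\<sigma>' (\<alpha> ?m)))"
    by (rule lk_pp) (simp_all add: aa D)
  show ?thesis
    apply (simp only: 1 lkpp[OF assms] tg_def cr_def s'2[OF D(1)] s'2[OF D(2)])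
    apply (simp only: s'1[of ?m] s'1[of "\<alpha> ?m"])
    by (cases "?m \<in> S"; cases "\<alpha> ?m \<in> S"; cases b) (simp_all add: pp_swap2[of "\<sigma> (\<sigma> ?m)" "\<sigma> ?m"])
qed

lemma res_flip: "res_link D \<alpha> \<sigma>' ms v = res_link D \<alpha> \<sigma> ms (tg v)"
proof -
  have "\<And>i. i < n \<Longrightarrow> lk \<alpha> \<sigma>' ms i (v i) = lk \<alpha> \<sigma> ms i (tg v i)"
    using lk_flip unfolding tg_def by simp
  then show ?thesis unfolding res_link_lk by blast
qed

lemma num_flip: "num_circles D \<alpha> \<sigma>' ms v = num_circles D \<alpha> \<sigma> ms (tg v)"
  unfolding num_circles_def res_flip ..

definition CC :: "nat set" where "CC = {i. i < n \<and> cr i}"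
definition hs where "hs i = (if ms!i \<in> S then ms!i else \<alpha> (ms!i))"
definition KK where "KK = {x\<in>S. \<alpha> x \<notin> S}"
definition crh where "crh h = ((h \<in> S) \<noteq> (\<alpha> h \<in> S))"

lemma hs: assumes "i \<in> CC"
  shows "hs i \<in> S" "\<alpha> (hs i) \<notin> S" "hs i \<in> MD" "\<alpha> (hs i) \<in> MD" "{hs i, \<alpha> (hs i)} = {ms!i, \<alpha> (ms!i)}"
    "hs i \<in> D" "\<alpha> (hs i) \<in> D"
proof -
  have i: "i < n" "cr i" using assms unfolding CC_def by auto
  have D: "ms!i \<in> D" using ms_in[OF i(1)] .
  show "hs i \<in> S" "\<alpha> (hs i) \<notin> S" using i(2) aa[OF D] unfolding hs_def cr_def by auto
  show "hs i \<in> MD" "\<alpha> (hs i) \<in> MD" using ms_MD[OF i(1)] aa[OF D] unfolding hs_def by auto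
  then show "hs i \<in> D" "\<alpha> (hs i) \<in> D" using MD_D by auto
  show "{hs i, \<alpha> (hs i)} = {ms!i, \<alpha> (ms!i)}" using aa[OF D] unfolding hs_def by auto
qed

lemma crh_cr: assumes "i < n" "h \<in> {ms!i, \<alpha> (ms!i)}" shows "crh h = cr i"
  using assms aa[OF ms_in[OF assms(1)]] unfolding crh_def cr_def by auto

lemma finC: "finite CC" unfolding CC_def by simp
lemma finS: "finite S" using finite_subset[OF SD fD] .
lemma finK: "finite KK" unfolding KK_def using finS by simp

lemma hs_inj: "inj_on hs CC"
proof (rule inj_onI)
  fix i j assume a: "i \<in> CC" "j \<in> CC" "hs i = hs j"
  have "i < n" "j < n" using a unfolding CC_def by auto
  moreover have "hs i \<in> {ms!i, \<alpha> (ms!i)}" "hs i \<in> {ms!j, \<alpha> (ms!j)}" using hs(5)[OF a(1)] hs(5)[OF a(2)] a(3) by blast+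
  ultimately show "i = j" using idx by blast
qed

lemma hsK: "hs ` CC \<subseteq> KK" using hs(1,2) unfolding KK_def by auto

lemma cardC: "card CC \<le> 2"
proof -
  have "card CC = card (hs ` CC)" using card_image[OF hs_inj] by simp
  also have "\<dots> \<le> card KK" by (rule card_mono[OF finK hsK])
  finally show ?thesis using Kc unfolding KK_def by simp
qed

lemma lkC: assumes "i \<in> CC"
  shows "lk \<alpha> \<sigma> ms i b = (if b then pp (\<sigma> (hs i)) (\<sigma> (\<sigma> (hs i))) (\<sigma> (\<alpha> (hs i))) (\<sigma> (\<sigma> (\<alpha> (hs i))))
                           else pp (\<sigma> (hs i)) (\<sigma> (\<sigma> (hs i))) (\<sigma> (\<sigma> (\<alpha> (hs i)))) (\<sigma> (\<alpha> (hs i))))"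
proof -
  have i: "i < n" using assms unfolding CC_def by auto
  have D: "ms!i \<in> D" using ms_in[OF i] .
  show ?thesis
  proof (cases "ms!i \<in> S")
    case True then show ?thesis unfolding hs_def lkpp[OF i] by simp
  next
    case False then show ?thesis unfolding hs_def lkpp[OF i] using aa[OF D] by (simp add: pp_def; blast)
  qed
qed

lemma lk_side: assumes "i < n" "(x,y) \<in> lk \<alpha> \<sigma> ms i b"
  shows "(x \<in> S \<longleftrightarrow> y \<in> S) \<longleftrightarrow> \<not> cr i"
proof -
  obtain h where h: "h \<in> {ms!i, \<alpha> (ms!i)}" "x \<in> {\<sigma> h, \<sigma> (\<sigma> h)}" "y \<in> {\<sigma> (\<alpha> h), \<sigma> (\<sigma> (\<alpha> h))}"
    using lk_cases[OF assms(2)] by metis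
  have hM: "h \<in> MD" using h(1) ms_MD[OF assms(1)] by auto
  have hD: "h \<in> D" "\<alpha> h \<in> D" using MD_D[OF hM] MD_D[OF MD_a[OF hM]] by auto
  have "x \<in> S \<longleftrightarrow> h \<in> S" using h(2) S_iff[OF hD(1)] S_iff2[OF hD(1)] by auto
  moreover have "y \<in> S \<longleftrightarrow> \<alpha> h \<in> S" using h(3) S_iff[OF hD(2)] S_iff2[OF hD(2)] by auto
  moreover have "crh h = cr i" by (rule crh_cr[OF assms(1) h(1)])
  ultimately show ?thesis unfolding crh_def by blast
qed

lemma x_S: assumes "x \<in> X" shows "x \<in> S \<longleftrightarrow> hv x \<in> S"
proof -
  have hD: "hv x \<in> D" using hv(1)[OF assms] MD_D by blast
  show ?thesis using hv(2)[OF assms] S_iff[OF hD] S_iff2[OF hD] by auto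
qed

lemma Bf_S: assumes "x \<in> X" shows "Bf v x \<in> S \<longleftrightarrow> \<alpha> (hv x) \<in> S"
proof -
  obtain i where i: "i < n" "(x, Bf v x) \<in> lk \<alpha> \<sigma> ms i (v i)" using Bf_in[OF assms] by blast
  have hD: "\<alpha> (hv x) \<in> D" using MD_D[OF MD_a[OF hv(1)[OF assms]]] .
  show ?thesis using Bf_hv(2)[OF assms i] S_iff[OF hD] S_iff2[OF hD] by auto
qed

end

context flp begin

definition RR where
  "RR v = {(x,y). x \<in> X \<and> y \<in> X \<and> y = \<alpha> x} \<union> {(x,y). \<exists>i<n. \<not> cr i \<and> (x,y) \<in> lk \<alpha> \<sigma> ms i (v i)}"

lemma res_dec: "res_link D \<alpha> \<sigma> ms v = RR v \<union> (\<Union>i\<in>CC. lk \<alpha> \<sigma> ms i (v i))"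
proof (rule set_eqI, rule iffI)
  fix p assume "p \<in> res_link D \<alpha> \<sigma> ms v"
  then obtain x y where p: "p = (x,y)" "x \<in> X" "y \<in> X" "y = \<alpha> x \<or> (\<exists>i<n. (x,y) \<in> lk \<alpha> \<sigma> ms i (v i))"
    unfolding res_link_lk by blast
  show "p \<in> RR v \<union> (\<Union>i\<in>CC. lk \<alpha> \<sigma> ms i (v i))"
  proof (cases "y = \<alpha> x")
    case True then show ?thesis using p unfolding RR_def by blast
  next
    case False
    then obtain i where i: "i < n" "(x,y) \<in> lk \<alpha> \<sigma> ms i (v i)" using p by blast
    show ?thesis
    proof (cases "cr i")
      case True then have "i \<in> CC" using i unfolding CC_def by blast
      then show ?thesis using i p by blast
    next
      case False then show ?thesis using i p unfolding RR_def by blast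
    qed
  qed
next
  fix p assume a: "p \<in> RR v \<union> (\<Union>i\<in>CC. lk \<alpha> \<sigma> ms i (v i))"
  obtain x y where p: "p = (x,y)" by fastforce
  have "x \<in> X \<and> y \<in> X \<and> (y = \<alpha> x \<or> (\<exists>i<n. (x,y) \<in> lk \<alpha> \<sigma> ms i (v i)))"
  proof (cases "p \<in> RR v")
    case True
    then show ?thesis unfolding RR_def p using lk_X by blast
  next
    case False
    then obtain i where i: "i \<in> CC" "(x,y) \<in> lk \<alpha> \<sigma> ms i (v i)" using a p by blast
    have "i < n" using i(1) unfolding CC_def by blast
    then show ?thesis using lk_X[OF _ i(2)] i(2) by blast
  qed
  then show "p \<in> res_link D \<alpha> \<sigma> ms v" unfolding res_link_lk p by blast
qed

lemma RR_tg: "RR (tg v) = RR v"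
  unfolding RR_def tg_def by auto

lemma res_dec_tg: "res_link D \<alpha> \<sigma> ms (tg v) = RR v \<union> (\<Union>i\<in>CC. lk \<alpha> \<sigma> ms i (\<not> v i))"
proof -
  have "\<And>i. i \<in> CC \<Longrightarrow> tg v i = (\<not> v i)" unfolding tg_def CC_def by simp
  then have "(\<Union>i\<in>CC. lk \<alpha> \<sigma> ms i (tg v i)) = (\<Union>i\<in>CC. lk \<alpha> \<sigma> ms i (\<not> v i))" by simp
  then show ?thesis using res_dec[of "tg v"] RR_tg by simp
qed

lemma RR_X: "RR v \<subseteq> X \<times> X"
  unfolding RR_def using lk_X by blast

lemma RR_sym: "sym (RR v)"
proof (rule symI)
  fix x y assume a: "(x,y) \<in> RR v"
  show "(y,x) \<in> RR v"
  proof (cases "(x,y) \<in> {(x,y). x \<in> X \<and> y \<in> X \<and> y = \<alpha> x}")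
    case True
    then have "x \<in> X" "y = \<alpha> x" by auto
    then have "x = \<alpha> y" "y \<in> X" "x \<in> X" using aa X_a by auto
    then show ?thesis unfolding RR_def by blast
  next
    case False
    then obtain i where i: "i < n" "\<not> cr i" "(x,y) \<in> lk \<alpha> \<sigma> ms i (v i)" using a unfolding RR_def by blast
    then show ?thesis using lk_sym[OF i(1,3)] unfolding RR_def by blast
  qed
qed

lemma nocross: assumes "CC \<noteq> {}" "x \<in> X" shows "x \<in> S \<longleftrightarrow> \<alpha> x \<in> S"
proof -
  define I where "I = X \<inter> S"
  define f where "f = Bf (\<lambda>_. False)"
  define J where "J = {x\<in>I. f x \<notin> I}"
  have finI: "finite I" unfolding I_def using fD by simp
  have fI: "\<forall>x\<in>I. f x \<noteq> x \<and> f (f x) = x" unfolding I_def f_def using Bf_ne Bf_inv by blast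
  have Jalt: "\<And>x. x \<in> I \<Longrightarrow> (f x \<notin> I \<longleftrightarrow> \<alpha> (hv x) \<notin> S)"
    unfolding I_def f_def using Bf_S Bf_X by blast
  have Jg: "\<forall>x\<in>J. gg x \<in> J \<and> gg x \<noteq> x \<and> gg (gg x) = x"
  proof
    fix x assume x: "x \<in> J"
    then have xI: "x \<in> I" "\<alpha> (hv x) \<notin> S" using Jalt unfolding J_def by auto
    then have xX: "x \<in> X" "x \<in> S" unfolding I_def by auto
    have g: "gg x \<in> X" "gg x \<noteq> x" "gg (gg x) = x" "hv (gg x) = hv x" using gg_all[OF xX(1)] by auto
    have "gg x \<in> S" using x_S[OF g(1)] x_S[OF xX(1)] g(4) xX(2) by simp
    then have "gg x \<in> I" using g(1) unfolding I_def by simp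
    moreover have "f (gg x) \<notin> I" using Jalt[OF \<open>gg x \<in> I\<close>] g(4) xI(2) by simp
    ultimately show "gg x \<in> J \<and> gg x \<noteq> x \<and> gg (gg x) = x" using g unfolding J_def by simp
  qed
  have "finite J" unfolding J_def using finI by simp
  then have eJ: "even (card J)" using inv_even[OF _ Jg] by blast
  have eI: "even (card I)" using inv_parity[OF finI fI] eJ unfolding J_def by simp
  have aI: "\<forall>x\<in>I. \<alpha> x \<noteq> x \<and> \<alpha> (\<alpha> x) = x" unfolding I_def using a_ne aa by auto
  have eA: "even (card {x\<in>I. \<alpha> x \<notin> I})" using inv_parity[OF finI aI] eI by simp
  have XK: "{x\<in>I. \<alpha> x \<notin> I} = X \<inter> KK" unfolding I_def KK_def using X_a by auto
  have sub: "X \<inter> KK \<subseteq> KK - hs ` CC" using hs(3) by auto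
  have c1: "card (hs ` CC) \<ge> 1"
    using assms(1) finC card_image[OF hs_inj] by (simp add: Suc_le_eq card_gt_0_iff)
  have "card (KK - hs ` CC) = card KK - card (hs ` CC)" by (rule card_Diff_subset[OF finite_subset[OF hsK finK] hsK])
  then have "card (KK - hs ` CC) \<le> 1" using c1 Kc unfolding KK_def by simp
  then have "card (X \<inter> KK) \<le> 1" using card_mono[OF finite_Diff[OF finK] sub] by simp
  moreover have "even (card (X \<inter> KK))" using eA XK by simp
  moreover have "\<And>k::nat. k \<le> 1 \<Longrightarrow> even k \<Longrightarrow> k = 0" by presburger
  ultimately have "card (X \<inter> KK) = 0" by blast
  then have e: "X \<inter> KK = {}" using finK by simp
  show ?thesis
  proof
    assume "x \<in> S"
    then show "\<alpha> x \<in> S" using e assms(2) unfolding KK_def by blast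
  next
    assume a: "\<alpha> x \<in> S"
    show "x \<in> S"
    proof (rule ccontr)
      assume "x \<notin> S"
      then have "\<alpha> x \<in> KK" using a aa assms(2) unfolding KK_def by auto
      then show False using e X_a[OF assms(2)] by blast
    qed
  qed
qed

lemma side_RR: assumes "CC \<noteq> {}" "(x,y) \<in> RR v" shows "x \<in> S \<longleftrightarrow> y \<in> S"
proof (cases "(x,y) \<in> {(x,y). x \<in> X \<and> y \<in> X \<and> y = \<alpha> x}")
  case True then show ?thesis using nocross[OF assms(1)] by auto
next
  case False
  then obtain i where i: "i < n" "\<not> cr i" "(x,y) \<in> lk \<alpha> \<sigma> ms i (v i)" using assms(2) unfolding RR_def by blast
  then show ?thesis using lk_side[OF i(1,3)] by blast
qed

lemma side_RRs: assumes "CC \<noteq> {}" "(x,y) \<in> (RR v)\<^sup>*" shows "x \<in> S \<longleftrightarrow> y \<in> S"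
  using assms(2) by (induction rule: rtrancl_induct) (use side_RR[OF assms(1)] in blast)+

definition PS where "PS = {y\<in>X. crh (hv y)}"

lemma class_even: assumes "CC \<noteq> {}" "x \<in> X" shows "even (card ((RR v)\<^sup>*``{x} \<inter> PS))"
proof -
  define Cl where "Cl = (RR v)\<^sup>*``{x}"
  have ClX: "Cl \<subseteq> X" unfolding Cl_def using rtr_in[OF RR_X _ assms(2)] by blast
  have finCl: "finite Cl" using finite_subset[OF ClX] fD by blast
  have side: "\<And>z. z \<in> Cl \<Longrightarrow> (z \<in> S \<longleftrightarrow> x \<in> S)" unfolding Cl_def using side_RRs[OF assms(1)] by blast
  have clo: "\<And>y z. y \<in> Cl \<Longrightarrow> (y,z) \<in> RR v \<Longrightarrow> z \<in> Cl" unfolding Cl_def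
    by (auto intro: rtrancl_into_rtrancl)
  have acl: "{y\<in>Cl. \<alpha> y \<notin> Cl} = {}"
  proof -
    have "\<And>y. y \<in> Cl \<Longrightarrow> \<alpha> y \<in> Cl"
    proof -
      fix y assume y: "y \<in> Cl"
      then have "y \<in> X" using ClX by blast
      then have "(y, \<alpha> y) \<in> RR v" using X_a unfolding RR_def by blast
      then show "\<alpha> y \<in> Cl" using clo y by blast
    qed
    then show ?thesis by blast
  qed
  have aCl: "\<forall>y\<in>Cl. \<alpha> y \<noteq> y \<and> \<alpha> (\<alpha> y) = y" using ClX a_ne aa by blast
  have eCl: "even (card Cl)" using inv_parity[OF finCl aCl] acl by simp
  have bCl: "\<forall>y\<in>Cl. Bf v y \<noteq> y \<and> Bf v (Bf v y) = y" using ClX Bf_ne Bf_inv by blast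
  have eq: "{y\<in>Cl. Bf v y \<notin> Cl} = Cl \<inter> PS"
  proof (rule set_eqI)
    fix y
    show "y \<in> {y\<in>Cl. Bf v y \<notin> Cl} \<longleftrightarrow> y \<in> Cl \<inter> PS"
    proof (cases "y \<in> Cl")
      case False then show ?thesis by simp
    next
      case True
      then have yX: "y \<in> X" using ClX by blast
      obtain i where i: "i < n" "hv y = ms!i \<or> hv y = \<alpha> (ms!i)" using hv(1)[OF yX] MD_iff by blast
      have hi: "hv y \<in> {ms!i, \<alpha> (ms!i)}" using i(2) by blast
      have cc: "crh (hv y) = cr i" by (rule crh_cr[OF i(1) hi])
      show ?thesis
      proof (cases "crh (hv y)")
        case False
        have "(y, Bf v y) \<in> lk \<alpha> \<sigma> ms i (v i)" by (rule Bf_idx[OF yX i(1) hi])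
        then have "(y, Bf v y) \<in> RR v" using i(1) cc False unfolding RR_def by blast
        then have "Bf v y \<in> Cl" using clo True by blast
        then show ?thesis using False unfolding PS_def by simp
      next
        case c: True
        have "Bf v y \<in> S \<longleftrightarrow> y \<notin> S" using Bf_S[OF yX] x_S[OF yX] c unfolding crh_def by blast
        then have "Bf v y \<notin> Cl" using side True by blast
        then show ?thesis using True c yX unfolding PS_def by simp
      qed
    qed
  qed
  have "even (card (Cl \<inter> PS))" using inv_parity[OF finCl bCl] eCl eq by simp
  then show ?thesis unfolding Cl_def .
qed

lemma PS_char: "y \<in> PS \<longleftrightarrow> (\<exists>i\<in>CC. y \<in> {\<sigma> (hs i), \<sigma> (\<sigma> (hs i)), \<sigma> (\<alpha> (hs i)), \<sigma> (\<sigma> (\<alpha> (hs i)))})"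
proof
  assume "y \<in> PS"
  then have yX: "y \<in> X" and c: "crh (hv y)" unfolding PS_def by auto
  obtain i where i: "i < n" "hv y = ms!i \<or> hv y = \<alpha> (ms!i)" using hv(1)[OF yX] MD_iff by blast
  have hi: "hv y \<in> {ms!i, \<alpha> (ms!i)}" using i(2) by blast
  have "cr i" using crh_cr[OF i(1) hi] c by simp
  then have iC: "i \<in> CC" using i(1) unfolding CC_def by simp
  have "hv y \<in> {hs i, \<alpha> (hs i)}" using hs(5)[OF iC] hi by simp
  then show "\<exists>i\<in>CC. y \<in> {\<sigma> (hs i), \<sigma> (\<sigma> (hs i)), \<sigma> (\<alpha> (hs i)), \<sigma> (\<sigma> (\<alpha> (hs i)))}"
    using hv(2)[OF yX] iC by (intro bexI[of _ i]) auto
next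
  assume "\<exists>i\<in>CC. y \<in> {\<sigma> (hs i), \<sigma> (\<sigma> (hs i)), \<sigma> (\<alpha> (hs i)), \<sigma> (\<sigma> (\<alpha> (hs i)))}"
  then obtain i h where i: "i \<in> CC" "h \<in> {hs i, \<alpha> (hs i)}" "y \<in> {\<sigma> h, \<sigma> (\<sigma> h)}" by blast
  have hM: "h \<in> MD" using i(2) hs(3,4)[OF i(1)] by blast
  have yX: "y \<in> X" using i(3) nm1[OF hM] nm2[OF hM] s_in[OF MD_D[OF hM]] s_in[OF s_in[OF MD_D[OF hM]]] by auto
  have "hv y = h" using dart_of[OF hv(1)[OF yX] hM hv(2)[OF yX] i(3)] .
  moreover have "crh h" using i(2) hs(1,2)[OF i(1)] aa[OF hs(6)[OF i(1)]] unfolding crh_def by auto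
  ultimately show "y \<in> PS" using yX unfolding PS_def by simp
qed

end

context pmg begin
lemma sX: assumes "h \<in> MD" shows "\<sigma> h \<in> X" "\<sigma> (\<sigma> h) \<in> X"
  using nm1[OF assms] nm2[OF assms] s_in[OF MD_D[OF assms]] s_in[OF s_in[OF MD_D[OF assms]]] by auto

lemma disj_v: assumes "h \<in> MD" "k \<in> MD" "h \<noteq> k"
  shows "\<sigma> h \<noteq> \<sigma> k" "\<sigma> h \<noteq> \<sigma> (\<sigma> k)" "\<sigma> (\<sigma> h) \<noteq> \<sigma> k" "\<sigma> (\<sigma> h) \<noteq> \<sigma> (\<sigma> k)"
  using dart_of[OF assms(1,2)] assms(3) by blast+
end

context flp begin

lemma ev_side:
  assumes "CC \<noteq> {}" "p \<in> X" "Q \<subseteq> PS" "\<forall>q\<in>PS. (q \<in> S \<longleftrightarrow> p \<in> S) \<longrightarrow> q \<in> Q"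
  shows "even (card {q\<in>Q. (p,q) \<in> (RR v)\<^sup>*})"
proof -
  have "{q\<in>Q. (p,q) \<in> (RR v)\<^sup>*} = (RR v)\<^sup>*``{p} \<inter> PS"
  proof (rule set_eqI, rule iffI)
    fix q assume "q \<in> {q\<in>Q. (p,q) \<in> (RR v)\<^sup>*}"
    then show "q \<in> (RR v)\<^sup>*``{p} \<inter> PS" using assms(3) by blast
  next
    fix q assume q: "q \<in> (RR v)\<^sup>*``{p} \<inter> PS"
    then have "(p,q) \<in> (RR v)\<^sup>*" by blast
    then have "p \<in> S \<longleftrightarrow> q \<in> S" using side_RRs[OF assms(1)] by blast
    then show "q \<in> {q\<in>Q. (p,q) \<in> (RR v)\<^sup>*}" using q assms(4) by blast
  qed
  then show ?thesis using class_even[OF assms(1,2)] by simp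
qed

lemma core: "num_circles D \<alpha> \<sigma> ms (tg v) = num_circles D \<alpha> \<sigma> ms v"
proof -
  have fX: "finite X" using fD by simp
  have sR: "sym (RR v)" by (rule RR_sym)
  have RX: "RR v \<subseteq> X \<times> X" by (rule RR_X)
  have "card (X // (res_link D \<alpha> \<sigma> ms (tg v))\<^sup>*) = card (X // (res_link D \<alpha> \<sigma> ms v)\<^sup>*)"
  proof -
    have fC: "finite CC" by (rule finC)
    have r1: "res_link D \<alpha> \<sigma> ms (tg v) = RR v \<union> (\<Union>i\<in>CC. lk \<alpha> \<sigma> ms i (\<not> v i))" by (rule res_dec_tg)
    have r2: "res_link D \<alpha> \<sigma> ms v = RR v \<union> (\<Union>i\<in>CC. lk \<alpha> \<sigma> ms i (v i))" by (rule res_dec)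
    consider "CC = {}" | i where "CC = {i}" | i j where "i \<noteq> j" "CC = {i,j}"
    proof -
      consider "card CC = 0" | "card CC = 1" | "card CC = 2" using cardC by linarith
      then show ?thesis
      proof cases
        case 1 then show ?thesis using that(1) fC by simp
      next
        case 2
        then obtain i where "CC = {i}" by (rule card_1_singletonE)
        then show ?thesis by (rule that(2))
      next
        case 3
        then obtain i j where "CC = {i,j}" "i \<noteq> j" unfolding card_2_iff by blast
        then show ?thesis using that(3) by blast
      qed
    qed
    then show ?thesis
    proof cases
      case 1
      then show ?thesis unfolding r1 r2 by simp
    next
      case (2 i)
      have iC: "i \<in> CC" using 2 by simp
      have ne: "CC \<noteq> {}" using 2 by simp
      note H = hs[OF iC]
      define h where "h = hs i"
      define u where "u = \<sigma> h"
      define u2 where "u2 = \<sigma> (\<sigma> h)"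
      define z where "z = \<sigma> (\<alpha> h)"
      define z2 where "z2 = \<sigma> (\<sigma> (\<alpha> h))"
      have lkb: "\<And>b. lk \<alpha> \<sigma> ms i b = (if b then pp u u2 z z2 else pp u u2 z2 z)"
        unfolding u_def u2_def z_def z2_def h_def by (rule lkC[OF iC])
      have uX: "u \<in> X" "u2 \<in> X" unfolding u_def u2_def h_def using sX[OF H(3)] by auto
      have uS: "u \<in> S" "u2 \<in> S" unfolding u_def u2_def h_def using H(1) S_iff[OF H(6)] S_iff2[OF H(6)] by auto
      have zS: "z \<notin> S" "z2 \<notin> S" unfolding z_def z2_def h_def using H(2) S_iff[OF H(7)] S_iff2[OF H(7)] by auto
      have uu: "u \<noteq> u2" unfolding u_def u2_def h_def using s12[OF H(6)] .
      have PS1: "PS = {u,u2,z,z2}"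
      proof (rule set_eqI)
        fix y show "y \<in> PS \<longleftrightarrow> y \<in> {u,u2,z,z2}" unfolding PS_char 2 u_def u2_def z_def z2_def h_def by auto
      qed
      have "(u,u2) \<in> (RR v)\<^sup>*"
      proof (rule ccontr)
        assume nr: "(u,u2) \<notin> (RR v)\<^sup>*"
        have "even (card {q\<in>{u,u2}. (u,q) \<in> (RR v)\<^sup>*})"
          by (rule ev_side[OF ne uX(1)]) (use PS1 zS uS in auto)
        moreover have "{q\<in>{u,u2}. (u,q) \<in> (RR v)\<^sup>*} = {u}" using nr by auto
        ultimately show False by simp
      qed
      then have cl: "(RR v \<union> pp u u2 z z2)\<^sup>* = (RR v \<union> pp u u2 z2 z)\<^sup>*" by (rule ports2[OF sR])
      show ?thesis unfolding r1 r2 2 using cl by (simp add: lkb)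
    next
      case (3 i j)
      have iC: "i \<in> CC" and jC: "j \<in> CC" using 3 by auto
      have ne: "CC \<noteq> {}" using 3 by simp
      note Hi = hs[OF iC] and Hj = hs[OF jC]
      have hk: "hs i \<noteq> hs j" using hs_inj iC jC 3(1) unfolding inj_on_def by blast
      have ahk: "\<alpha> (hs i) \<noteq> \<alpha> (hs j)" using hk a_inj by blast
      define a1 where "a1 = \<sigma> (hs i)"
      define a2 where "a2 = \<sigma> (\<sigma> (hs i))"
      define b1 where "b1 = \<sigma> (hs j)"
      define b2 where "b2 = \<sigma> (\<sigma> (hs j))"
      define zA where "zA = \<sigma> (\<alpha> (hs i))"
      define zA2 where "zA2 = \<sigma> (\<sigma> (\<alpha> (hs i)))"
      define zB where "zB = \<sigma> (\<alpha> (hs j))"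
      define zB2 where "zB2 = \<sigma> (\<sigma> (\<alpha> (hs j)))"
      define c1 where "c1 = (if v i then zA else zA2)"
      define c2 where "c2 = (if v i then zA2 else zA)"
      define d1 where "d1 = (if v j then zB else zB2)"
      define d2 where "d2 = (if v j then zB2 else zB)"
      have lki: "lk \<alpha> \<sigma> ms i (v i) = pp a1 a2 c1 c2" "lk \<alpha> \<sigma> ms i (\<not> v i) = pp a1 a2 c2 c1"
        unfolding lkC[OF iC] a1_def a2_def c1_def c2_def zA_def zA2_def by simp_all
      have lkj: "lk \<alpha> \<sigma> ms j (v j) = pp b1 b2 d1 d2" "lk \<alpha> \<sigma> ms j (\<not> v j) = pp b1 b2 d2 d1"
        unfolding lkC[OF jC] b1_def b2_def d1_def d2_def zB_def zB2_def by simp_all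
      have inX: "a1 \<in> X" "a2 \<in> X" "b1 \<in> X" "b2 \<in> X"
        unfolding a1_def a2_def b1_def b2_def using sX[OF Hi(3)] sX[OF Hj(3)] by auto
      have zX: "zA \<in> X" "zA2 \<in> X" "zB \<in> X" "zB2 \<in> X"
        unfolding zA_def zA2_def zB_def zB2_def using sX[OF Hi(4)] sX[OF Hj(4)] by auto
      have inS: "a1 \<in> S" "a2 \<in> S" "b1 \<in> S" "b2 \<in> S"
        unfolding a1_def a2_def b1_def b2_def
        using Hi(1) Hj(1) S_iff[OF Hi(6)] S_iff2[OF Hi(6)] S_iff[OF Hj(6)] S_iff2[OF Hj(6)] by auto
      have zS: "zA \<notin> S" "zA2 \<notin> S" "zB \<notin> S" "zB2 \<notin> S"
        unfolding zA_def zA2_def zB_def zB2_def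
        using Hi(2) Hj(2) S_iff[OF Hi(7)] S_iff2[OF Hi(7)] S_iff[OF Hj(7)] S_iff2[OF Hj(7)] by auto
      have cset: "{c1,c2,d1,d2} = {zA,zA2,zB,zB2}" unfolding c1_def c2_def d1_def d2_def by auto
      have cX: "c1 \<in> X" "c2 \<in> X" "d1 \<in> X" "d2 \<in> X" using zX unfolding c1_def c2_def d1_def d2_def by auto
      have dsI: "distinct [a1,a2,b1,b2]"
        unfolding a1_def a2_def b1_def b2_def
        using disj_v[OF Hi(3) Hj(3) hk] s12[OF Hi(6)] s12[OF Hj(6)] by auto
      have dz: "distinct [zA,zA2,zB,zB2]"
        unfolding zA_def zA2_def zB_def zB2_def
        using disj_v[OF Hi(4) Hj(4) ahk] s12[OF Hi(7)] s12[OF Hj(7)] by auto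
      have dsO: "distinct [c1,c2,d1,d2]" using dz unfolding c1_def c2_def d1_def d2_def by auto
      have PS2: "PS = {a1,a2,b1,b2,zA,zA2,zB,zB2}"
      proof (rule set_eqI)
        fix y show "y \<in> PS \<longleftrightarrow> y \<in> {a1,a2,b1,b2,zA,zA2,zB,zB2}"
          unfolding PS_char 3 a1_def a2_def b1_def b2_def zA_def zA2_def zB_def zB2_def by auto
      qed
      have side: "\<forall>p\<in>{a1,a2,b1,b2}. \<forall>q\<in>{c1,c2,d1,d2}. (p,q) \<notin> (RR v)\<^sup>*"
      proof (intro ballI notI)
        fix p q assume p: "p \<in> {a1,a2,b1,b2}" and q: "q \<in> {c1,c2,d1,d2}" and r: "(p,q) \<in> (RR v)\<^sup>*"
        have "p \<in> S" using p inS by auto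
        moreover have "q \<notin> S" using q zS cset by auto
        ultimately show False using side_RRs[OF ne r] by blast
      qed
      have evI: "\<forall>p\<in>{a1,a2,b1,b2}. even (card {q\<in>{a1,a2,b1,b2}. (p,q) \<in> (RR v)\<^sup>*})"
      proof
        fix p assume p: "p \<in> {a1,a2,b1,b2}"
        have "p \<in> X" "p \<in> S" using p inX inS by auto
        then show "even (card {q\<in>{a1,a2,b1,b2}. (p,q) \<in> (RR v)\<^sup>*})"
          by (intro ev_side[OF ne]) (use PS2 zS in auto)
      qed
      have evO: "\<forall>p\<in>{c1,c2,d1,d2}. even (card {q\<in>{c1,c2,d1,d2}. (p,q) \<in> (RR v)\<^sup>*})"
      proof
        fix p assume p: "p \<in> {c1,c2,d1,d2}"
        have "p \<in> X" "p \<notin> S" using p zX zS cset by auto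
        then show "even (card {q\<in>{c1,c2,d1,d2}. (p,q) \<in> (RR v)\<^sup>*})"
          unfolding cset by (intro ev_side[OF ne]) (use PS2 inS in auto)
      qed
      have "card (X//(RR v \<union> (pp a1 a2 c1 c2 \<union> pp b1 b2 d1 d2))\<^sup>*) = card (X//(RR v \<union> (pp a1 a2 c2 c1 \<union> pp b1 b2 d2 d1))\<^sup>*)"
        by (rule ports4[OF fX sR RX inX cX dsI dsO side evI evO])
      moreover have "(\<Union>i\<in>CC. lk \<alpha> \<sigma> ms i (v i)) = pp a1 a2 c1 c2 \<union> pp b1 b2 d1 d2" using 3 lki lkj by simp
      moreover have "(\<Union>i\<in>CC. lk \<alpha> \<sigma> ms i (\<not> v i)) = pp a1 a2 c2 c1 \<union> pp b1 b2 d2 d1" using 3 lki lkj by simp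
      ultimately show ?thesis unfolding r1 r2 by simp
    qed
  qed
  then show ?thesis unfolding num_circles_def by simp
qed

lemma num_eq: "num_circles D \<alpha> \<sigma>' ms v = num_circles D \<alpha> \<sigma> ms v"
  using num_flip core by simp

end

theorem mainTheorem8:
  fixes D :: "'d set" and \<alpha> \<sigma> \<sigma>' :: "'d \<Rightarrow> 'd" and ms :: "'d list"
  assumes "pm_graph D \<alpha> \<sigma> ms"
    and "flip_move D \<alpha> \<sigma> \<sigma>'"
  shows "has_bad_face D \<alpha> \<sigma> ms \<longleftrightarrow> has_bad_face D \<alpha> \<sigma>' ms"
proof -
  obtain S where S: "S \<subseteq> D" "\<forall>x\<in>S. \<sigma> x \<in> S" "card {x \<in> S. \<alpha> x \<notin> S} \<le> 2"
    "\<forall>x. \<sigma>' x = (if x \<in> S then \<sigma> (\<sigma> x) else \<sigma> x)"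
    using assms(2) unfolding flip_move_def by blast
  interpret flp D \<alpha> \<sigma> ms S \<sigma>'
    by (unfold_locales) (use assms(1) S in auto)
  have e: "\<And>v. num_circles D \<alpha> \<sigma>' ms v = num_circles D \<alpha> \<sigma> ms v" by (rule num_eq)
  show ?thesis unfolding has_bad_face_def eta_arc_def Delta_arc_def m_arc_def e ..
qed

end
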